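(* Let $\mathcal{H}$ be a complex Hilbert space and let $T\in\mathcal{B}(\mathcal{H})$ be a $\Delta_T$-regular completely hyperexpansive operator. For $n\ge1$ let $A_n(T)=-\sum_{j=0}^n(-1)^j\binom{n}{j}T^{*j}T^j\ (\ge0)$. The following statements are equivalent: (i) $T$ is $A_n(T)$-regular for every integer $n\ge2$; (ii) $T$ is $A_j(T)$-regular for $j=2,3$; (iii) $T$ is $A_2(T)$-regular and the compression $P_{\overline{A_2(T)\mathcal{H}}}T|_{\overline{A_2(T)\mathcal{H}}}$ of $T$ to $\overline{A_2(T)\mathcal{H}}$ is a quasinormal contraction. In addition, if one of (i)–(iii) holds, then $\mathcal{N}(A_2(T))=\mathcal{N}(A_n(T))$ for all $n\ge3$.
   Context: $\Delta_T=T^*T-I$ (so $A_1(T)=\Delta_T$). $T$ is completely hyperexpansive if $\sum_{j=0}^n(-1)^j\binom{n}{j}T^{*j}T^j\le0$ for all $n\ge1$. For a positive operator $A$, $T$ is $A$-regular if $AT=A^{1/2}TA^{1/2}$. An operator $Q$ is quasinormal if $QQ^*Q=Q^*Q^2$. *)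

theory Defs
  imports "HOL-Analysis.Analysis"
begin

class complex_vector = real_vector +
  fixes scaleC :: "complex \<Rightarrow> 'a \<Rightarrow> 'a"
  assumes scaleC_add_right: "scaleC a (x + y) = scaleC a x + scaleC a y"
    and scaleC_add_left: "scaleC (a + b) x = scaleC a x + scaleC b x"
    and scaleC_scaleC: "scaleC a (scaleC b x) = scaleC (a * b) x"
    and scaleC_one: "scaleC 1 x = x"
    and scaleR_scaleC: "scaleR r x = scaleC (complex_of_real r) x"

class complex_normed_vector = complex_vector + real_normed_vector +
  assumes norm_scaleC: "norm (scaleC a x) = cmod a * norm x"

text \<open>Inner product, conjugate-linear in the first and linear in the second argument.\<close>
class complex_inner = complex_normed_vector +
  fixes cinner :: "'a \<Rightarrow> 'a \<Rightarrow> complex"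
  assumes cinner_commute: "cinner x y = cnj (cinner y x)"
    and cinner_add_left: "cinner (x + y) z = cinner x z + cinner y z"
    and cinner_scaleC_left: "cinner (scaleC r x) y = cnj r * cinner x y"
    and cinner_self_real: "Im (cinner x x) = 0"
    and cinner_self_nonneg: "0 \<le> Re (cinner x x)"
    and cinner_self_eq_zero: "cinner x x = 0 \<longleftrightarrow> x = 0"
    and norm_eq_sqrt_cinner: "norm x = sqrt (Re (cinner x x))"

class chilbert_space = complex_inner + complete_space

instantiation complex :: complex_vector
begin
definition scaleC_complex_def: "scaleC a (x::complex) = a * x"
instance by standard (auto simp: scaleC_complex_def algebra_simps scaleR_conv_of_real)
end

instance complex :: complex_normed_vector
  by standard (simp add: scaleC_complex_def norm_mult)

instantiation complex :: complex_inner
begin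
definition cinner_complex_def: "cinner (x::complex) y = cnj x * y"
instance
  by standard (auto simp: cinner_complex_def scaleC_complex_def algebra_simps complex_norm_square
      cmod_def power2_eq_square)
end

instance complex :: chilbert_space ..

definition clinear :: "('a::complex_vector \<Rightarrow> 'b::complex_vector) \<Rightarrow> bool" where
  "clinear f \<longleftrightarrow> (\<forall>x y. f (x + y) = f x + f y) \<and> (\<forall>c x. f (scaleC c x) = scaleC c (f x))"

definition cbounded :: "('a::complex_normed_vector \<Rightarrow> 'b::complex_normed_vector) \<Rightarrow> bool" where
  "cbounded f \<longleftrightarrow> clinear f \<and> (\<exists>K. \<forall>x. norm (f x) \<le> norm x * K)"

definition cadjoint :: "('a::chilbert_space \<Rightarrow> 'a) \<Rightarrow> ('a \<Rightarrow> 'a)" where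
  "cadjoint T = (THE S. \<forall>x y. cinner (T x) y = cinner x (S y))"

definition positive_op :: "('a::chilbert_space \<Rightarrow> 'a) \<Rightarrow> bool" where
  "positive_op A \<longleftrightarrow> cbounded A \<and> (\<forall>x. Im (cinner (A x) x) = 0 \<and> 0 \<le> Re (cinner (A x) x))"

definition op_le :: "('a::chilbert_space \<Rightarrow> 'a) \<Rightarrow> ('a \<Rightarrow> 'a) \<Rightarrow> bool" where
  "op_le A B \<longleftrightarrow> cbounded A \<and> cbounded B \<and> positive_op (\<lambda>x. B x - A x)"

definition op_sqrt :: "('a::chilbert_space \<Rightarrow> 'a) \<Rightarrow> ('a \<Rightarrow> 'a)" where
  "op_sqrt A = (THE B. positive_op B \<and> B \<circ> B = A)"

definition regular :: "('a::chilbert_space \<Rightarrow> 'a) \<Rightarrow> ('a \<Rightarrow> 'a) \<Rightarrow> bool" where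
  "regular A T \<longleftrightarrow> A \<circ> T = op_sqrt A \<circ> T \<circ> op_sqrt A"

definition hyp_sum :: "('a::chilbert_space \<Rightarrow> 'a) \<Rightarrow> nat \<Rightarrow> ('a \<Rightarrow> 'a)" where
  "hyp_sum T n = (\<lambda>x. \<Sum>j = 0..n. scaleR ((-1) ^ j * real (n choose j)) ((cadjoint T ^^ j) ((T ^^ j) x)))"

text \<open>\<open>A\<^sub>n(T) = - \<Sum>\<^sub>j\<^sub>=\<^sub>0\<^sup>n (-1)\<^sup>j (n choose j) T\<^sup>*\<^sup>j T\<^sup>j\<close>; in particular \<open>A\<^sub>1(T) = T\<^sup>*T - I = \<Delta>\<^sub>T\<close>.\<close>
definition A_op :: "('a::chilbert_space \<Rightarrow> 'a) \<Rightarrow> nat \<Rightarrow> ('a \<Rightarrow> 'a)" where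
  "A_op T n = (\<lambda>x. - hyp_sum T n x)"

definition Delta :: "('a::chilbert_space \<Rightarrow> 'a) \<Rightarrow> ('a \<Rightarrow> 'a)" where
  "Delta T = (\<lambda>x. cadjoint T (T x) - x)"

definition completely_hyperexpansive :: "('a::chilbert_space \<Rightarrow> 'a) \<Rightarrow> bool" where
  "completely_hyperexpansive T \<longleftrightarrow> cbounded T \<and> (\<forall>n\<ge>1. op_le (hyp_sum T n) (\<lambda>_. 0))"

definition kernel :: "('a::chilbert_space \<Rightarrow> 'a) \<Rightarrow> 'a set" where
  "kernel A = {x. A x = 0}"

definition orth_proj :: "'a::chilbert_space set \<Rightarrow> 'a \<Rightarrow> 'a" where
  "orth_proj M x = (THE y. y \<in> M \<and> (\<forall>z\<in>M. cinner z (x - y) = 0))"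

text \<open>Compression \<open>P\<^sub>M T|\<^sub>M\<close>, an operator on \<open>M\<close> (values off \<open>M\<close> are irrelevant and set to 0).\<close>
definition compression :: "'a::chilbert_space set \<Rightarrow> ('a \<Rightarrow> 'a) \<Rightarrow> ('a \<Rightarrow> 'a)" where
  "compression M T = (\<lambda>x. if x \<in> M then orth_proj M (T x) else 0)"

text \<open>Adjoint of an operator \<open>S : M \<rightarrow> M\<close> in the Hilbert space \<open>M\<close> (extended by 0 off \<open>M\<close>).\<close>
definition adjoint_on :: "'a::chilbert_space set \<Rightarrow> ('a \<Rightarrow> 'a) \<Rightarrow> ('a \<Rightarrow> 'a)" where
  "adjoint_on M S = (THE S'. (\<forall>x. x \<notin> M \<longrightarrow> S' x = 0) \<and> (\<forall>x\<in>M. S' x \<in> M) \<and>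
                         (\<forall>x\<in>M. \<forall>y\<in>M. cinner (S x) y = cinner x (S' y)))"

definition quasinormal_on :: "'a::chilbert_space set \<Rightarrow> ('a \<Rightarrow> 'a) \<Rightarrow> bool" where
  "quasinormal_on M S \<longleftrightarrow> (\<forall>x\<in>M. S (adjoint_on M S (S x)) = adjoint_on M S (S (S x)))"

definition contraction_on :: "'a::chilbert_space set \<Rightarrow> ('a \<Rightarrow> 'a) \<Rightarrow> bool" where
  "contraction_on M S \<longleftrightarrow> (\<forall>x\<in>M. norm (S x) \<le> norm x)"

end

theory Submission
  imports Defs
begin

lemma cinner_add_right: "cinner x (y + z) = cinner x y + cinner x z"
  using cinner_commute[of x "y+z"] cinner_commute[of y x] cinner_commute[of z x] by (simp add: cinner_add_left)

lemma cinner_scaleC_right: "cinner x (scaleC r y) = r * cinner x y"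
  using cinner_commute[of x "scaleC r y"] cinner_commute[of y x] by (simp add: cinner_scaleC_left)

lemma cinner_zero_left[simp]: "cinner 0 x = 0"
  using cinner_add_left[of 0 0 x] by simp

lemma cinner_zero_right[simp]: "cinner x 0 = 0"
  using cinner_add_right[of x 0 0] by simp

lemma cinner_minus_left: "cinner (- x) y = - cinner x y"
  using minus_unique[of "cinner x y" "cinner (- x) y"] cinner_add_left[of x "-x" y] by simp

lemma cinner_minus_right: "cinner x (- y) = - cinner x y"
  using minus_unique[of "cinner x y" "cinner x (- y)"] cinner_add_right[of x y "-y"] by simp

lemma cinner_diff_left: "cinner (x - y) z = cinner x z - cinner y z"
  using cinner_add_left[of x "-y" z] by (simp add: cinner_minus_left)

lemma cinner_diff_right: "cinner x (y - z) = cinner x y - cinner x z"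
  using cinner_add_right[of x y "-z"] by (simp add: cinner_minus_right)

lemma cinner_scaleR_left: "cinner (scaleR r x) y = of_real r * cinner x y"
  by (simp add: scaleR_scaleC cinner_scaleC_left)

lemma cinner_scaleR_right: "cinner x (scaleR r y) = of_real r * cinner x y"
  by (simp add: scaleR_scaleC cinner_scaleC_right)

lemma cinner_sum_left: "cinner (\<Sum>i\<in>I. f i) y = (\<Sum>i\<in>I. cinner (f i) y)"
  by (induction I rule: infinite_finite_induct) (auto simp: cinner_add_left)

lemma cinner_sum_right: "cinner y (\<Sum>i\<in>I. f i) = (\<Sum>i\<in>I. cinner y (f i))"
  by (induction I rule: infinite_finite_induct) (auto simp: cinner_add_right)

lemma cinner_self_eq: "cinner x x = complex_of_real ((norm x)\<^sup>2)"
proof -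
  have "Re (cinner x x) \<ge> 0" by (rule cinner_self_nonneg)
  then have "(norm x)\<^sup>2 = Re (cinner x x)" by (simp add: norm_eq_sqrt_cinner)
  then show ?thesis using cinner_self_real[of x] by (simp add: complex_eq_iff)
qed

lemma Re_cinner_self: "Re (cinner x x) = (norm x)\<^sup>2"
  by (simp add: cinner_self_eq)

lemma cinner_commute_Re: "Re (cinner x y) = Re (cinner y x)"
  by (subst cinner_commute) simp

lemma norm_add_sq: "(norm (x + y))\<^sup>2 = (norm x)\<^sup>2 + (norm y)\<^sup>2 + 2 * Re (cinner x y)"
proof -
  have "(norm (x + y))\<^sup>2 = Re (cinner (x+y) (x+y))" by (simp add: Re_cinner_self)
  also have "\<dots> = Re (cinner x x) + Re (cinner y y) + Re (cinner x y) + Re (cinner y x)"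
    by (simp add: cinner_add_left cinner_add_right)
  finally show ?thesis by (simp add: Re_cinner_self cinner_commute_Re[of y x])
qed

lemma norm_diff_sq: "(norm (x - y))\<^sup>2 = (norm x)\<^sup>2 + (norm y)\<^sup>2 - 2 * Re (cinner x y)"
proof -
  have "(norm (x - y))\<^sup>2 = Re (cinner (x-y) (x-y))" by (simp add: Re_cinner_self)
  also have "\<dots> = Re (cinner x x) + Re (cinner y y) - Re (cinner x y) - Re (cinner y x)"
    by (simp add: cinner_diff_left cinner_diff_right)
  finally show ?thesis by (simp add: Re_cinner_self cinner_commute_Re[of y x])
qed

lemma cinner_eq_zero_iff: "(\<forall>z. cinner z x = 0) \<longleftrightarrow> x = 0"
proof
  assume "\<forall>z. cinner z x = 0"
  then have "cinner x x = 0" by blast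
  then show "x = 0" by (simp only: cinner_self_eq_zero)
qed simp

lemma cinner_ext: assumes "\<And>z. cinner z x = cinner z y" shows "x = y"
proof -
  have "cinner (x-y) (x - y) = 0" using assms by (simp add: cinner_diff_right)
  then have "x - y = 0" by (simp only: cinner_self_eq_zero)
  then show ?thesis by simp
qed

lemma cinner_ext_left: assumes "\<And>z. cinner x z = cinner y z" shows "x = y"
proof (rule cinner_ext)
  fix z show "cinner z x = cinner z y" using assms[of z] cinner_commute[of z x] cinner_commute[of z y] by simp
qed

lemma Cauchy_Schwarz: "cmod (cinner x y) \<le> norm x * norm y"
proof (cases "y = 0")
  case True then show ?thesis by simp
next
  case False
  then have ny: "norm y > 0" by simp
  define c where "c = cinner y x / complex_of_real ((norm y)\<^sup>2)"
  have "0 \<le> Re (cinner (x - scaleC c y) (x - scaleC c y))" by (rule cinner_self_nonneg)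
  also have "cinner (x - scaleC c y) (x - scaleC c y)
     = cinner x x - c * cinner x y - cnj c * cinner y x + cnj c * c * cinner y y"
    by (simp add: cinner_diff_left cinner_diff_right cinner_scaleC_left cinner_scaleC_right algebra_simps)
  also have "cnj c * c * cinner y y = cnj c * cinner y x"
  proof -
    have "c * cinner y y = cinner y x"
      using ny by (simp add: c_def cinner_self_eq)
    then show ?thesis by (simp add: mult.assoc)
  qed
  also have "c * cinner x y = complex_of_real ((cmod (cinner x y))\<^sup>2 / (norm y)\<^sup>2)"
  proof -
    have "cinner y x * cinner x y = complex_of_real ((cmod (cinner x y))\<^sup>2)"
      using complex_norm_square[of "cinner x y"] cinner_commute[of y x] by (simp only: mult.commute)
    then show ?thesis by (simp add: c_def)
  qed
  finally have "0 \<le> (norm x)\<^sup>2 - (cmod (cinner x y))\<^sup>2 / (norm y)\<^sup>2"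
    by (simp add: cinner_self_eq)
  then have "(cmod (cinner x y))\<^sup>2 \<le> (norm x)\<^sup>2 * (norm y)\<^sup>2"
    using ny by (simp add: field_simps)
  then have "(cmod (cinner x y))\<^sup>2 \<le> (norm x * norm y)\<^sup>2" by (simp add: power_mult_distrib)
  then show ?thesis by (rule power2_le_imp_le) simp
qed

lemma tendsto_cinner[tendsto_intros]:
  assumes "(f \<longlongrightarrow> a) F" "(g \<longlongrightarrow> b) F"
  shows "((\<lambda>x. cinner (f x) (g x)) \<longlongrightarrow> cinner a b) F"
proof -
  have bl: "bounded_bilinear (\<lambda>x y. cinner x y)"
  proof
    fix a a' b b' and r :: real
    show "cinner (a + a') b = cinner a b + cinner a' b" by (rule cinner_add_left)
    show "cinner a (b + b') = cinner a b + cinner a b'" by (rule cinner_add_right)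
    show "cinner (scaleR r a) b = scaleR r (cinner a b)" by (simp add: cinner_scaleR_left scaleR_conv_of_real)
    show "cinner a (scaleR r b) = scaleR r (cinner a b)" by (simp add: cinner_scaleR_right scaleR_conv_of_real)
    show "\<exists>K. \<forall>a b. norm (cinner a b) \<le> norm a * norm b * K"
      by (rule exI[of _ 1]) (simp add: Cauchy_Schwarz)
  qed
  show ?thesis by (rule bounded_bilinear.tendsto[OF bl assms])
qed

lemma continuous_on_cinner[continuous_intros]:
  assumes "continuous_on S f" "continuous_on S g"
  shows "continuous_on S (\<lambda>x. cinner (f x) (g x))"
  unfolding continuous_on_def
proof (intro ballI)
  fix x assume "x \<in> S"
  then have "(f \<longlongrightarrow> f x) (at x within S)" "(g \<longlongrightarrow> g x) (at x within S)"
    using assms unfolding continuous_on_def by auto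
  then show "((\<lambda>x. cinner (f x) (g x)) \<longlongrightarrow> cinner (f x) (g x)) (at x within S)"
    by (rule tendsto_cinner)
qed

lemma scaleC_zero_right[simp]: "scaleC a 0 = (0::'a::complex_vector)"
  using scaleC_add_right[of a 0 0] by simp

lemma scaleC_zero_left[simp]: "scaleC 0 x = (0::'a::complex_vector)"
  using scaleC_add_left[of 0 0 x] by simp

lemma scaleC_minus_right: "scaleC a (- x) = - scaleC a (x::'a::complex_vector)"
  using minus_unique[of "scaleC a x" "scaleC a (- x)"] scaleC_add_right[of a x "-x"] by simp

lemma scaleC_diff_right: "scaleC a (x - y) = scaleC a x - scaleC a (y::'a::complex_vector)"
  using scaleC_add_right[of a x "-y"] by (simp add: scaleC_minus_right)

lemma scaleC_minus_left: "scaleC (- a) x = - scaleC a (x::'a::complex_vector)"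
  using minus_unique[of "scaleC a x" "scaleC (- a) x"] scaleC_add_left[of a "-a" x] by simp

lemma scaleC_diff_left: "scaleC (a - b) x = scaleC a x - scaleC b (x::'a::complex_vector)"
  using scaleC_add_left[of a "-b" x] by (simp add: scaleC_minus_left)

section \<open>Linear and bounded operators\<close>

lemma clinear_add: "clinear f \<Longrightarrow> f (x + y) = f x + f y"
  by (simp add: clinear_def)

lemma clinear_scaleC: "clinear f \<Longrightarrow> f (scaleC c x) = scaleC c (f x)"
  by (simp add: clinear_def)

lemma clinear_zero: "clinear f \<Longrightarrow> f 0 = 0"
  using clinear_add[of f 0 0] by simp

lemma clinear_minus: "clinear f \<Longrightarrow> f (- x) = - f x"
  using clinear_add[of f x "-x"] clinear_zero[of f]
  by (metis neg_eq_iff_add_eq_0 add.commute)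

lemma clinear_diff: "clinear f \<Longrightarrow> f (x - y) = f x - f y"
  using clinear_add[of f x "-y"] clinear_minus[of f y] by simp

lemma clinear_scaleR: "clinear f \<Longrightarrow> f (scaleR r x) = scaleR r (f x)"
  by (simp add: scaleR_scaleC clinear_scaleC)

lemma clinear_sum: "clinear f \<Longrightarrow> f (\<Sum>i\<in>I. g i) = (\<Sum>i\<in>I. f (g i))"
  by (induction I rule: infinite_finite_induct) (auto simp: clinear_zero clinear_add)

lemma cbounded_clinear: "cbounded f \<Longrightarrow> clinear f"
  by (simp add: cbounded_def)

lemma cbounded_bounded_linear: assumes "cbounded f" shows "bounded_linear f"
proof -
  from assms obtain K where K: "\<forall>x. norm (f x) \<le> norm x * K" and l: "clinear f"
    by (auto simp: cbounded_def)
  show ?thesis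
    by (rule bounded_linear_intro[of f K]) (use K l in \<open>auto simp: clinear_add clinear_scaleR\<close>)
qed

lemma cbounded_pos_bound: assumes "cbounded f" obtains K where "K > 0" "\<And>x. norm (f x) \<le> norm x * K"
  using bounded_linear.pos_bounded[OF cbounded_bounded_linear[OF assms]] by blast

lemma cbounded_continuous: "cbounded f \<Longrightarrow> continuous_on S f"
  by (intro linear_continuous_on cbounded_bounded_linear)

lemma cbounded_tendsto: "cbounded f \<Longrightarrow> (g \<longlongrightarrow> a) F \<Longrightarrow> ((\<lambda>x. f (g x)) \<longlongrightarrow> f a) F"
  using bounded_linear.tendsto[OF cbounded_bounded_linear] by blast

lemma cboundedI:
  assumes "\<And>x y. f (x + y) = f x + f y" "\<And>c x. f (scaleC c x) = scaleC c (f x)"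
    "\<And>x. norm (f x) \<le> norm x * K"
  shows "cbounded f"
  using assms unfolding cbounded_def clinear_def by blast

lemma cbounded_id: "cbounded (\<lambda>x. x)"
  by (rule cboundedI[where K=1]) auto

lemma cbounded_zero: "cbounded (\<lambda>x. 0)"
  by (rule cboundedI[where K=1]) auto

lemma cbounded_comp: assumes "cbounded f" "cbounded g" shows "cbounded (\<lambda>x. f (g x))"
proof -
  obtain K where K: "\<And>x. norm (f x) \<le> norm x * K" "K > 0" using cbounded_pos_bound[OF assms(1)] by blast
  obtain L where L: "\<And>x. norm (g x) \<le> norm x * L" "L > 0" using cbounded_pos_bound[OF assms(2)] by blast
  show ?thesis
  proof (rule cboundedI[where K="L*K"])
    fix x
    have "norm (f (g x)) \<le> norm (g x) * K" by (rule K)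
    also have "\<dots> \<le> norm x * L * K" using L K by (intro mult_right_mono) auto
    finally show "norm (f (g x)) \<le> norm x * (L * K)" by (simp add: mult.assoc)
  qed (use assms in \<open>auto simp: clinear_add[OF cbounded_clinear[OF assms(1)]] clinear_scaleC[OF cbounded_clinear[OF assms(1)]]
     clinear_add[OF cbounded_clinear[OF assms(2)]] clinear_scaleC[OF cbounded_clinear[OF assms(2)]]\<close>)
qed

lemma cbounded_comp': "cbounded f \<Longrightarrow> cbounded g \<Longrightarrow> cbounded (f \<circ> g)"
  using cbounded_comp[of f g] by (simp add: o_def)

lemma cbounded_add: assumes "cbounded f" "cbounded g" shows "cbounded (\<lambda>x. f x + g x)"
proof -
  obtain K where K: "\<And>x. norm (f x) \<le> norm x * K" "K > 0" using cbounded_pos_bound[OF assms(1)] by blast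
  obtain L where L: "\<And>x. norm (g x) \<le> norm x * L" "L > 0" using cbounded_pos_bound[OF assms(2)] by blast
  show ?thesis
  proof (rule cboundedI[where K="K+L"])
    fix x
    have "norm (f x + g x) \<le> norm (f x) + norm (g x)" by (rule norm_triangle_ineq)
    also have "\<dots> \<le> norm x * K + norm x * L" using K L by (intro add_mono) auto
    finally show "norm (f x + g x) \<le> norm x * (K + L)" by (simp add: algebra_simps)
  qed (use assms in \<open>auto simp: clinear_add[OF cbounded_clinear[OF assms(1)]] clinear_scaleC[OF cbounded_clinear[OF assms(1)]]
     clinear_add[OF cbounded_clinear[OF assms(2)]] clinear_scaleC[OF cbounded_clinear[OF assms(2)]] scaleC_add_right\<close>)
qed

lemma cbounded_minus: assumes "cbounded f" shows "cbounded (\<lambda>x. - f x)"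
proof -
  obtain K where K: "\<And>x. norm (f x) \<le> norm x * K" "K > 0" using cbounded_pos_bound[OF assms(1)] by blast
  show ?thesis
    by (rule cboundedI[where K=K]) (use assms K in \<open>auto simp: clinear_add[OF cbounded_clinear[OF assms]] clinear_scaleC[OF cbounded_clinear[OF assms]] scaleC_minus_right\<close>)
qed

lemma cbounded_diff: assumes "cbounded f" "cbounded g" shows "cbounded (\<lambda>x. f x - g x)"
  using cbounded_add[OF assms(1) cbounded_minus[OF assms(2)]] by simp

lemma scaleC_scaleR_commute: "scaleC c (scaleR r x) = scaleR r (scaleC c (x::'a::complex_vector))"
  by (simp add: scaleR_scaleC scaleC_scaleC mult.commute)

lemma bounded_linear_scaleC: "bounded_linear (\<lambda>x::'a::complex_normed_vector. scaleC c x)"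
  by (rule bounded_linear_intro[where K="cmod c"]) (auto simp: scaleC_add_right scaleC_scaleR_commute norm_scaleC)

lemma cbounded_scaleC: assumes "cbounded f" shows "cbounded (\<lambda>x. scaleC c (f x))"
proof -
  have "cbounded (\<lambda>x. scaleC c x)"
    by (rule cboundedI[where K="cmod c"]) (auto simp: scaleC_add_right scaleC_scaleC mult.commute norm_scaleC)
  then show ?thesis using cbounded_comp[OF _ assms] by blast
qed

lemma cbounded_scaleR: assumes "cbounded f" shows "cbounded (\<lambda>x. scaleR r (f x))"
  using cbounded_scaleC[OF assms, of "complex_of_real r"] by (simp add: scaleR_scaleC)

lemma cbounded_sum: assumes "\<And>i. i \<in> I \<Longrightarrow> cbounded (f i)" shows "cbounded (\<lambda>x. \<Sum>i\<in>I. f i x)"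
  using assms
proof (induction I rule: infinite_finite_induct)
  case (infinite A) then show ?case by (simp add: cbounded_zero)
next
  case empty then show ?case by (simp add: cbounded_zero)
next
  case (insert i F)
  then show ?case by (simp add: cbounded_add)
qed

lemma cbounded_funpow: fixes f :: "'a::complex_normed_vector \<Rightarrow> 'a" assumes "cbounded f" shows "cbounded (f ^^ n)"
proof (induction n)
  case 0
  have "f ^^ 0 = (\<lambda>x. x)" by (rule ext) simp
  then show ?case using cbounded_id by (simp only:)
next
  case (Suc n) then show ?case using cbounded_comp'[OF assms Suc] by (simp add: o_def)
qed

section \<open>Complex subspaces and orthogonal projection\<close>

definition csubspace :: "'a::complex_vector set \<Rightarrow> bool" where
  "csubspace V \<longleftrightarrow> 0 \<in> V \<and> (\<forall>x\<in>V. \<forall>y\<in>V. x + y \<in> V) \<and> (\<forall>c. \<forall>x\<in>V. scaleC c x \<in> V)"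

lemma csubspace_minus: "csubspace V \<Longrightarrow> x \<in> V \<Longrightarrow> - x \<in> V"
  unfolding csubspace_def by (metis scaleC_minus_left scaleC_one)

lemma csubspace_diff: "csubspace V \<Longrightarrow> x \<in> V \<Longrightarrow> y \<in> V \<Longrightarrow> x - y \<in> V"
  using csubspace_minus[of V y] unfolding csubspace_def by (metis diff_conv_add_uminus)

lemma csubspace_scaleR: "csubspace V \<Longrightarrow> x \<in> V \<Longrightarrow> scaleR r x \<in> V"
  unfolding csubspace_def by (simp add: scaleR_scaleC)

lemma csubspace_closure: fixes V :: "'a::complex_normed_vector set" assumes "csubspace V" shows "csubspace (closure V)"
  unfolding csubspace_def
proof (intro conjI ballI allI)
  show "0 \<in> closure V" using assms by (simp add: csubspace_def closure_subset[THEN subsetD])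
next
  fix x y assume "x \<in> closure V" "y \<in> closure V"
  then obtain f g where f: "\<forall>n. f n \<in> V" "f \<longlonglongrightarrow> x" and g: "\<forall>n. g n \<in> V" "g \<longlonglongrightarrow> y"
    unfolding closure_sequential by meson
  have "(\<lambda>n. f n + g n) \<longlonglongrightarrow> x + y" using f g by (intro tendsto_add)
  moreover have "\<forall>n. f n + g n \<in> V" using f g assms by (simp add: csubspace_def)
  ultimately show "x + y \<in> closure V" unfolding closure_sequential by (intro exI[where x="\<lambda>n. f n + g n"]) simp
next
  fix c and x :: 'a assume "x \<in> closure V"
  then obtain f where f: "\<forall>n. f n \<in> V" "f \<longlonglongrightarrow> x"
    unfolding closure_sequential by blast
  have "(\<lambda>n. scaleC c (f n)) \<longlonglongrightarrow> scaleC c x"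
    using bounded_linear.tendsto[OF bounded_linear_scaleC f(2)] .
  moreover have "\<forall>n. scaleC c (f n) \<in> V" using f assms by (simp add: csubspace_def)
  ultimately show "scaleC c x \<in> closure V" unfolding closure_sequential by (intro exI[where x="\<lambda>n. scaleC c (f n)"]) simp
qed

lemma csubspace_range: assumes "clinear f" shows "csubspace (range f)"
  unfolding csubspace_def
proof (intro conjI ballI allI)
  show "0 \<in> range f" using clinear_zero[OF assms] rangeI[of f 0] by simp
  show "x + y \<in> range f" if xy: "x \<in> range f" "y \<in> range f" for x y
  proof -
    obtain a b where "x = f a" "y = f b" using xy by blast
    then have "x + y = f (a + b)" by (simp add: clinear_add[OF assms])
    then show ?thesis by simp
  qed
  show "scaleC c x \<in> range f" if xr: "x \<in> range f" for c x
  proof -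
    obtain a where "x = f a" using xr by blast
    then have "scaleC c x = f (scaleC c a)" by (simp add: clinear_scaleC[OF assms])
    then show ?thesis by simp
  qed
qed

definition orth :: "'a::complex_inner set \<Rightarrow> 'a set" where
  "orth S = {x. \<forall>z\<in>S. cinner z x = 0}"

lemma orth_closed: "closed (orth S)"
proof -
  have "orth S = (\<Inter>z\<in>S. {x. cinner z x = 0})" by (auto simp: orth_def)
  moreover have "closed {x. cinner z x = 0}" for z :: 'a
    by (intro closed_Collect_eq continuous_intros)
  ultimately show ?thesis by auto
qed

lemma orth_csubspace: "csubspace (orth S)"
  by (auto simp: csubspace_def orth_def cinner_add_right cinner_scaleC_right)

lemma parallelogram: fixes a b :: "'a::complex_inner" shows "(norm (a + b))\<^sup>2 + (norm (a - b))\<^sup>2 = 2 * (norm a)\<^sup>2 + 2 * (norm b)\<^sup>2"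
  by (simp add: norm_add_sq norm_diff_sq)

lemma proj_exists:
  fixes x :: "'a::chilbert_space"
  assumes V: "csubspace V" "closed V"
  shows "\<exists>y\<in>V. \<forall>z\<in>V. cinner z (x - y) = 0"
proof -
  define D where "D = (\<lambda>v. (norm (x - v))\<^sup>2) ` V"
  define d where "d = Inf D"
  have Dne: "D \<noteq> {}" using V by (auto simp: D_def csubspace_def)
  have Dbdd: "bdd_below D" by (auto simp: D_def bdd_below_def intro!: exI[of _ 0])
  have dle: "d \<le> (norm (x - v))\<^sup>2" if "v \<in> V" for v
    unfolding d_def using Dbdd that by (auto simp: D_def intro!: cInf_lower)
  have "\<exists>v\<in>V. (norm (x - v))\<^sup>2 < d + 1 / real (Suc n)" for n
  proof -
    have "Inf D < d + 1 / real (Suc n)" by (simp add: d_def)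
    then obtain t where "t \<in> D" "t < d + 1 / real (Suc n)"
      using cInf_lessD[OF Dne] by blast
    then show ?thesis by (auto simp: D_def)
  qed
  then obtain v where v: "\<And>n. v n \<in> V" "\<And>n. (norm (x - v n))\<^sup>2 < d + 1 / real (Suc n)"
    by metis
  have vdist: "(norm (v n - v m))\<^sup>2 \<le> 2 / real (Suc n) + 2 / real (Suc m)" for n m
  proof -
    define mid where "mid = scaleR (1/2) (v n + v m)"
    have "mid \<in> V" using V v(1) by (auto simp: mid_def csubspace_def intro!: csubspace_scaleR)
    then have "d \<le> (norm (x - mid))\<^sup>2" by (rule dle)
    have eq: "(x - v n) + (x - v m) = scaleR 2 (x - mid)"
      by (simp add: mid_def algebra_simps scaleR_2)
    have "(norm ((x - v n) + (x - v m)))\<^sup>2 = 4 * (norm (x - mid))\<^sup>2"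
      by (simp add: eq power_mult_distrib)
    moreover have "(norm ((x - v n) + (x - v m)))\<^sup>2 + (norm ((x - v n) - (x - v m)))\<^sup>2
        = 2 * (norm (x - v n))\<^sup>2 + 2 * (norm (x - v m))\<^sup>2" by (rule parallelogram)
    moreover have "(norm ((x - v n) - (x - v m)))\<^sup>2 = (norm (v n - v m))\<^sup>2"
      using norm_minus_commute[of "v m" "v n"] by simp
    ultimately show ?thesis using v(2)[of n] v(2)[of m] \<open>d \<le> _\<close> by linarith
  qed
  have "Cauchy v"
  proof (rule metric_CauchyI)
    fix e :: real assume "e > 0"
    obtain N where N: "4 / real (Suc N) < e\<^sup>2"
    proof -
      obtain N where "real N > 4 / e\<^sup>2" using reals_Archimedean2 by blast
      then have h: "4 < real N * e\<^sup>2" using \<open>e > 0\<close> by (simp add: field_simps)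
      have "real N * e\<^sup>2 \<le> real (Suc N) * e\<^sup>2" by (intro mult_right_mono) auto
      then have "4 < real (Suc N) * e\<^sup>2" using h by linarith
      then have "4 / real (Suc N) < e\<^sup>2" by (simp add: field_simps)
      then show ?thesis using that by blast
    qed
    show "\<exists>M. \<forall>m\<ge>M. \<forall>n\<ge>M. dist (v m) (v n) < e"
    proof (intro exI allI impI)
      fix m n assume "N \<le> m" "N \<le> n"
      have "2 / real (Suc m) \<le> 2 / real (Suc N)" "2 / real (Suc n) \<le> 2 / real (Suc N)"
        using \<open>N \<le> m\<close> \<open>N \<le> n\<close> by (auto simp: frac_le)
      then have "(dist (v m) (v n))\<^sup>2 < e\<^sup>2" using vdist[of m n] N by (simp add: dist_norm)
      then show "dist (v m) (v n) < e" using \<open>e > 0\<close> by (simp add: power_less_imp_less_base)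
    qed
  qed
  then obtain y where y: "v \<longlonglongrightarrow> y" using Cauchy_convergent_iff convergent_def by blast
  have yV: "y \<in> V" using closed_sequentially[OF V(2)] v(1) y by blast
  have ymin: "(norm (x - y))\<^sup>2 \<le> (norm (x - w))\<^sup>2" if "w \<in> V" for w
  proof -
    have l1: "(\<lambda>n. (norm (x - v n))\<^sup>2) \<longlonglongrightarrow> (norm (x - y))\<^sup>2"
      by (intro tendsto_intros y)
    have l2: "(\<lambda>n. d + 1 / real (Suc n)) \<longlonglongrightarrow> d + 0"
      by (intro tendsto_intros LIMSEQ_inverse_real_of_nat[unfolded inverse_eq_divide])
    have "(norm (x - y))\<^sup>2 \<le> d + 0"
      by (rule LIMSEQ_le[OF l1 l2], rule exI[of _ 0], intro allI impI less_imp_le, rule v(2))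
    then show ?thesis using dle[OF that] by linarith
  qed
  have "\<forall>z\<in>V. cinner z (x - y) = 0"
  proof
    fix z assume zV: "z \<in> V"
    define c where "c = cinner z (x - y)"
    define w where "w = x - y"
    define t where "t = 1 / ((norm z)\<^sup>2 + 1)"
    have "(norm z)\<^sup>2 + 1 > 0" by (simp add: add_nonneg_pos)
    then have tpos: "t > 0" by (simp add: t_def)
    have tz: "t * (norm z)\<^sup>2 < 1" using \<open>(norm z)\<^sup>2 + 1 > 0\<close> by (simp add: t_def divide_simps)
    define s where "s = complex_of_real t * c"
    have "y + scaleC s z \<in> V" using V yV zV by (simp add: csubspace_def)
    then have "(norm w)\<^sup>2 \<le> (norm (w - scaleC s z))\<^sup>2" using ymin unfolding w_def
      by (metis diff_diff_eq)
    also have "\<dots> = (norm w)\<^sup>2 + (norm (scaleC s z))\<^sup>2 - 2 * Re (cinner w (scaleC s z))"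
      by (rule norm_diff_sq)
    also have "(norm (scaleC s z))\<^sup>2 = t\<^sup>2 * (cmod c)\<^sup>2 * (norm z)\<^sup>2"
      using tpos by (simp add: norm_scaleC s_def norm_mult power_mult_distrib)
    also have "cinner w (scaleC s z) = s * cnj c"
      by (simp add: cinner_scaleC_right c_def w_def) (metis cinner_commute)
    also have "Re (s * cnj c) = t * (cmod c)\<^sup>2"
    proof -
      have "(cmod c)\<^sup>2 = (Re c)\<^sup>2 + (Im c)\<^sup>2" by (rule cmod_power2)
      then show ?thesis unfolding s_def by (simp add: power2_eq_square algebra_simps)
    qed
    finally have "0 \<le> t * (cmod c)\<^sup>2 * (t * (norm z)\<^sup>2 - 2)"
      by (simp add: algebra_simps power2_eq_square)
    moreover have "t * (norm z)\<^sup>2 - 2 < 0" using tz by simp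
    ultimately have "t * (cmod c)\<^sup>2 \<le> 0"
      using mult_pos_neg[of "t * (cmod c)\<^sup>2" "t * (norm z)\<^sup>2 - 2"] by linarith
    then have "(cmod c)\<^sup>2 \<le> 0" using tpos by (simp add: mult_le_0_iff)
    then show "cinner z (x - y) = 0" by (simp add: c_def)
  qed
  then show ?thesis using yV by blast
qed

locale closed_csub =
  fixes V :: "'a::chilbert_space set"
  assumes csub: "csubspace V" and clo: "closed V"
begin

lemma proj_unique:
  assumes "y \<in> V" "\<forall>z\<in>V. cinner z (x - y) = 0"
  shows "orth_proj V x = y"
  unfolding orth_proj_def
proof (rule the_equality)
  show "y \<in> V \<and> (\<forall>z\<in>V. cinner z (x - y) = 0)" using assms by blast
next
  fix y' assume y': "y' \<in> V \<and> (\<forall>z\<in>V. cinner z (x - y') = 0)"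
  have d: "y' - y \<in> V" using csubspace_diff[OF csub] y' assms(1) by blast
  have "cinner (y' - y) (x - y) - cinner (y' - y) (x - y') = 0"
    using assms(2) y' d by simp
  then have "cinner (y' - y) (y' - y) = 0"
    by (simp add: cinner_diff_right[symmetric] algebra_simps)
  then have "y' - y = 0" by (simp only: cinner_self_eq_zero)
  then show "y' = y" by simp
qed

lemma proj_ex: "orth_proj V x \<in> V \<and> (\<forall>z\<in>V. cinner z (x - orth_proj V x) = 0)"
proof -
  obtain y where "y \<in> V" "\<forall>z\<in>V. cinner z (x - y) = 0" using proj_exists[OF csub clo] by blast
  then show ?thesis using proj_unique by simp
qed

lemma proj_in: "orth_proj V x \<in> V" using proj_ex by blast

lemma proj_orth: "z \<in> V \<Longrightarrow> cinner z (x - orth_proj V x) = 0" using proj_ex by blast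

lemma proj_orth': "z \<in> V \<Longrightarrow> cinner (x - orth_proj V x) z = 0"
  using proj_orth[of z x] cinner_commute[of "x - orth_proj V x" z] by simp

lemma proj_id: "x \<in> V \<Longrightarrow> orth_proj V x = x"
  by (rule proj_unique) auto

lemma proj_proj: "orth_proj V (orth_proj V x) = orth_proj V x"
  by (rule proj_id[OF proj_in])

lemma proj_selfadj: "cinner (orth_proj V x) y = cinner x (orth_proj V y)"
proof -
  have "cinner (orth_proj V x) y = cinner (orth_proj V x) (orth_proj V y) + cinner (orth_proj V x) (y - orth_proj V y)"
    by (simp add: cinner_diff_right)
  also have "cinner (orth_proj V x) (y - orth_proj V y) = 0" by (rule proj_orth[OF proj_in])
  also have "cinner (orth_proj V x) (orth_proj V y) = cinner x (orth_proj V y) - cinner (x - orth_proj V x) (orth_proj V y)"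
    by (simp add: cinner_diff_left)
  also have "cinner (x - orth_proj V x) (orth_proj V y) = 0" by (rule proj_orth'[OF proj_in])
  finally show ?thesis by simp
qed

lemma proj_diff_orth: "x - orth_proj V x \<in> orth V"
  using proj_orth by (auto simp: orth_def)

lemma proj_zero_iff: "orth_proj V x = 0 \<longleftrightarrow> x \<in> orth V"
proof
  assume "orth_proj V x = 0" then show "x \<in> orth V" using proj_diff_orth[of x] by simp
next
  assume "x \<in> orth V"
  then show "orth_proj V x = 0"
    by (intro proj_unique) (auto simp: orth_def csub[unfolded csubspace_def])
qed

lemma proj_cbounded: "cbounded (orth_proj V)"
proof (rule cboundedI[where K=1])
  fix x y
  show "orth_proj V (x + y) = orth_proj V x + orth_proj V y"
  proof (rule proj_unique)
    show "orth_proj V x + orth_proj V y \<in> V" using csub proj_in by (simp add: csubspace_def)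
    show "\<forall>z\<in>V. cinner z (x + y - (orth_proj V x + orth_proj V y)) = 0"
    proof
      fix z assume "z \<in> V"
      have "x + y - (orth_proj V x + orth_proj V y) = (x - orth_proj V x) + (y - orth_proj V y)" by simp
      then show "cinner z (x + y - (orth_proj V x + orth_proj V y)) = 0"
        using proj_orth[OF \<open>z \<in> V\<close>] by (simp only: cinner_add_right) simp
    qed
  qed
next
  fix c x
  show "orth_proj V (scaleC c x) = scaleC c (orth_proj V x)"
  proof (rule proj_unique)
    show "scaleC c (orth_proj V x) \<in> V" using csub proj_in by (simp add: csubspace_def)
    show "\<forall>z\<in>V. cinner z (scaleC c x - scaleC c (orth_proj V x)) = 0"
      using proj_orth by (simp add: scaleC_diff_right[symmetric] cinner_scaleC_right)
  qed
next
  fix x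
  have "(norm x)\<^sup>2 = (norm (orth_proj V x + (x - orth_proj V x)))\<^sup>2" by simp
  also have "\<dots> = (norm (orth_proj V x))\<^sup>2 + (norm (x - orth_proj V x))\<^sup>2"
    using proj_orth[OF proj_in, of x x] by (simp only: norm_add_sq) simp
  finally have "(norm (orth_proj V x))\<^sup>2 \<le> (norm x)\<^sup>2" by simp
  then show "norm (orth_proj V x) \<le> norm x * 1" using power2_le_imp_le[of "norm (orth_proj V x)" "norm x"] by simp
qed

lemma orth_orth: "orth (orth V) = V"
proof
  show "V \<subseteq> orth (orth V)"
  proof
    fix x assume x: "x \<in> V"
    show "x \<in> orth (orth V)" unfolding orth_def
    proof (intro CollectI ballI)
      fix z assume "z \<in> {x. \<forall>z\<in>V. cinner z x = 0}"
      then have "cinner x z = 0" using x by blast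
      then show "cinner z x = 0" using cinner_commute[of z x] by simp
    qed
  qed
next
  show "orth (orth V) \<subseteq> V"
  proof
    fix x assume x: "x \<in> orth (orth V)"
    have d: "x - orth_proj V x \<in> orth V" by (rule proj_diff_orth)
    have "cinner (x - orth_proj V x) x = 0" using x d by (simp add: orth_def)
    moreover have "cinner (x - orth_proj V x) (orth_proj V x) = 0" by (rule proj_orth'[OF proj_in])
    ultimately have "cinner (x - orth_proj V x) (x - orth_proj V x) = 0" by (simp add: cinner_diff_right)
    then have "x - orth_proj V x = 0" by (simp only: cinner_self_eq_zero)
    then show "x \<in> V" using proj_in[of x] by simp
  qed
qed

end

section \<open>Adjoint\<close>

lemma adjoint_exists:
  fixes T :: "'a::chilbert_space \<Rightarrow> 'a"
  assumes T: "cbounded T"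
  shows "\<exists>S. \<forall>x y. cinner (T x) y = cinner x (S y)"
proof -
  have lT: "clinear T" using T by (rule cbounded_clinear)
  have "\<exists>u. \<forall>x. cinner y (T x) = cinner u x" for y
  proof -
    define f where "f x = cinner y (T x)" for x
    define K where "K = {x. f x = 0}"
    have fadd: "f (a + b) = f a + f b" for a b by (simp add: f_def clinear_add[OF lT] cinner_add_right)
    have fsc: "f (scaleC c a) = c * f a" for c a by (simp add: f_def clinear_scaleC[OF lT] cinner_scaleC_right)
    have fdiff: "f (a - b) = f a - f b" for a b by (simp add: f_def clinear_diff[OF lT] cinner_diff_right)
    have Kcs: "csubspace K"
      unfolding csubspace_def K_def using fadd fsc by (auto simp: f_def clinear_zero[OF lT])
    have Kcl: "closed K"
    proof -
      have "continuous_on UNIV f" unfolding f_def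
        by (intro continuous_intros cbounded_continuous[OF T])
      then show ?thesis unfolding K_def by (intro closed_Collect_eq) (auto intro: continuous_intros)
    qed
    interpret K: closed_csub K using Kcs Kcl by unfold_locales
    show ?thesis
    proof (cases "\<forall>x. f x = 0")
      case True then show ?thesis by (intro exI[of _ 0]) (simp add: f_def)
    next
      case False
      then obtain x0 where x0: "f x0 \<noteq> 0" by blast
      define w where "w = x0 - orth_proj K x0"
      have fw: "f w = f x0" using K.proj_in[of x0] by (simp add: w_def fdiff K_def)
      have worth: "w \<in> orth K" unfolding w_def by (rule K.proj_diff_orth)
      have wne: "w \<noteq> 0" using fw x0 by (auto simp: f_def clinear_zero[OF lT])
      then have nw: "(norm w)\<^sup>2 \<noteq> 0" by simp
      define u where "u = scaleC (cnj (f w) / complex_of_real ((norm w)\<^sup>2)) w"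
      show ?thesis
      proof (intro exI allI)
        fix x
        define a where "a = f x / f w"
        have "x - scaleC a w \<in> K" using fw x0 by (simp add: K_def fdiff fsc a_def)
        then have "cinner (x - scaleC a w) w = 0" using worth by (simp add: orth_def)
        then have "cinner w (x - scaleC a w) = 0" using cinner_commute[of w "x - scaleC a w"] by simp
        then have "cinner w x = a * cinner w w" by (simp add: cinner_diff_right cinner_scaleC_right)
        then have "cinner w x = a * complex_of_real ((norm w)\<^sup>2)" by (simp add: cinner_self_eq)
        then have "f x = f w * cinner w x / complex_of_real ((norm w)\<^sup>2)"
          using fw x0 nw by (simp add: a_def field_simps)
        then show "cinner y (T x) = cinner u x"
          by (simp add: u_def cinner_scaleC_left f_def)
      qed
    qed
  qed
  then obtain S where S: "\<forall>y x. cinner y (T x) = cinner (S y) x" by metis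
  show ?thesis
  proof (intro exI allI)
    fix x y
    show "cinner (T x) y = cinner x (S y)"
      using S cinner_commute[of "T x" y] cinner_commute[of x "S y"] by simp
  qed
qed

locale bop =
  fixes T :: "'a::chilbert_space \<Rightarrow> 'a"
  assumes T: "cbounded T"
begin

lemma adj: "cinner (T x) y = cinner x (cadjoint T y)"
proof -
  obtain S where S: "\<forall>x y. cinner (T x) y = cinner x (S y)" using adjoint_exists[OF T] by blast
  have "cadjoint T = S"
    unfolding cadjoint_def
  proof (rule the_equality)
    fix S' assume "\<forall>x y. cinner (T x) y = cinner x (S' y)"
    then have "S' y = S y" for y
    proof -
      assume S': "\<forall>x y. cinner (T x) y = cinner x (S' y)"
      show "S' y = S y"
      proof (rule cinner_ext)
        fix z
        have "cinner z (S' y) = cinner (T z) y" using S' by simp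
        also have "\<dots> = cinner z (S y)" using S by simp
        finally show "cinner z (S' y) = cinner z (S y)" .
      qed
    qed
    then show "S' = S" by auto
  qed (use S in blast)
  then show ?thesis using S by simp
qed

lemma adj': "cinner (cadjoint T x) y = cinner x (T y)"
  using adj[of y x] cinner_commute[of "T y" x] cinner_commute[of y "cadjoint T x"] by simp

lemma lin: "clinear T" using T by (rule cbounded_clinear)

lemma adj_cbounded: "cbounded (cadjoint T)"
proof -
  obtain K where K: "\<And>x. norm (T x) \<le> norm x * K" "K > 0" using cbounded_pos_bound[OF T] by blast
  show ?thesis
  proof (rule cboundedI[where K=K])
    fix x y
    show "cadjoint T (x + y) = cadjoint T x + cadjoint T y"
      by (rule cinner_ext) (simp add: adj[symmetric] cinner_add_right)
  next
    fix c x
    show "cadjoint T (scaleC c x) = scaleC c (cadjoint T x)"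
      by (rule cinner_ext) (simp add: adj[symmetric] cinner_scaleC_right)
  next
    fix y
    have "(norm (cadjoint T y))\<^sup>2 = Re (cinner (T (cadjoint T y)) y)"
      by (simp add: adj Re_cinner_self)
    also have "\<dots> \<le> cmod (cinner (T (cadjoint T y)) y)" by (rule complex_Re_le_cmod)
    also have "\<dots> \<le> norm (T (cadjoint T y)) * norm y" by (rule Cauchy_Schwarz)
    also have "\<dots> \<le> norm (cadjoint T y) * K * norm y" using K by (intro mult_right_mono) auto
    finally have h: "(norm (cadjoint T y))\<^sup>2 \<le> norm (cadjoint T y) * (K * norm y)" by (simp add: mult.assoc)
    show "norm (cadjoint T y) \<le> norm y * K"
    proof (cases "norm (cadjoint T y) = 0")
      case True then show ?thesis using K by simp
    next
      case False
      then have "norm (cadjoint T y) > 0" by simp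
      with h show ?thesis by (simp add: power2_eq_square mult.commute)
    qed
  qed
qed

lemma adj_lin: "clinear (cadjoint T)" using adj_cbounded by (rule cbounded_clinear)

lemma adj_pow: "cinner ((T ^^ j) x) y = cinner x ((cadjoint T ^^ j) y)"
proof (induction j arbitrary: x)
  case 0 then show ?case by simp
next
  case (Suc j)
  have "cinner ((T ^^ Suc j) x) y = cinner ((T ^^ j) (T x)) y" by (simp add: funpow_swap1)
  also have "\<dots> = cinner (T x) ((cadjoint T ^^ j) y)" by (rule Suc)
  also have "\<dots> = cinner x (cadjoint T ((cadjoint T ^^ j) y))" by (rule adj)
  finally show ?case by simp
qed

end

section \<open>Self-adjoint and positive operators\<close>

definition selfadj :: "('a::chilbert_space \<Rightarrow> 'a) \<Rightarrow> bool" where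
  "selfadj A \<longleftrightarrow> cbounded A \<and> (\<forall>x y. cinner (A x) y = cinner x (A y))"

lemma positive_selfadj: assumes "positive_op A" shows "selfadj A"
proof -
  have bA: "cbounded A" and pos: "\<And>x. Im (cinner (A x) x) = 0" using assms by (auto simp: positive_op_def)
  have lA: "clinear A" using bA by (rule cbounded_clinear)
  define h where "h x y = cinner (A x) y - cinner x (A y)" for x y
  have h0: "h x x = 0" for x
  proof -
    have "cinner x (A x) = cnj (cinner (A x) x)" by (rule cinner_commute)
    also have "\<dots> = cinner (A x) x" using pos[of x] by (simp add: complex_eq_iff)
    finally show ?thesis by (simp add: h_def)
  qed
  have hadd: "h (x + y) (x + y) = h x x + h y y + h x y + h y x" for x y
    by (simp add: h_def clinear_add[OF lA] cinner_add_left cinner_add_right)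
  have hsc1: "h x (scaleC c y) = c * h x y" for x y c
    by (simp add: h_def clinear_scaleC[OF lA] cinner_scaleC_right algebra_simps)
  have hsc2: "h (scaleC c y) x = cnj c * h y x" for x y c
    by (simp add: h_def clinear_scaleC[OF lA] cinner_scaleC_left algebra_simps)
  have "h x y = 0" for x y
  proof -
    have e1: "h x y + h y x = 0" using hadd[of x y] h0 by simp
    have "h x (scaleC \<i> y) + h (scaleC \<i> y) x = 0" using hadd[of x "scaleC \<i> y"] h0 by simp
    then have e2: "\<i> * h x y - \<i> * h y x = 0" by (simp add: hsc1 hsc2)
    from e1 have "h y x = - h x y" by (simp add: eq_neg_iff_add_eq_0 add.commute)
    with e2 have "(2 * \<i>) * h x y = 0" by (simp add: algebra_simps)
    then show "h x y = 0" by simp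
  qed
  then show ?thesis using bA by (simp add: selfadj_def h_def)
qed

lemma positive_real: "positive_op A \<Longrightarrow> cinner (A x) x = complex_of_real (Re (cinner (A x) x))"
  by (simp add: positive_op_def complex_eq_iff)

lemma positive_CS:
  assumes "positive_op A"
  shows "(cmod (cinner (A x) y))\<^sup>2 \<le> Re (cinner (A x) x) * Re (cinner (A y) y)"
proof -
  have bA: "cbounded A" using assms by (simp add: positive_op_def)
  have lA: "clinear A" using bA by (rule cbounded_clinear)
  have sa: "\<And>x y. cinner (A x) y = cinner x (A y)" using positive_selfadj[OF assms] by (simp add: selfadj_def)
  have nn: "\<And>z. 0 \<le> Re (cinner (A z) z)" using assms by (simp add: positive_op_def)
  define c where "c = cinner (A x) y"
  define a where "a = Re (cinner (A x) x)"
  define b where "b = Re (cinner (A y) y)"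
  have Ayx: "cinner (A y) x = cnj c"
    unfolding c_def using sa[of y x] cinner_commute[of y "A x"] by simp
  have q: "0 \<le> a - 2 * t * (cmod c)\<^sup>2 + t\<^sup>2 * (cmod c)\<^sup>2 * b" for t :: real
  proof -
    define s where "s = complex_of_real t * cnj c"
    have "0 \<le> Re (cinner (A (x - scaleC s y)) (x - scaleC s y))" by (rule nn)
    also have "cinner (A (x - scaleC s y)) (x - scaleC s y)
      = cinner (A x) x - s * cinner (A x) y - cnj s * cinner (A y) x + cnj s * s * cinner (A y) y"
      by (simp add: clinear_diff[OF lA] clinear_scaleC[OF lA] cinner_diff_left cinner_diff_right
          cinner_scaleC_left cinner_scaleC_right algebra_simps)
    also have "Re \<dots> = a - 2 * t * (cmod c)\<^sup>2 + t\<^sup>2 * (cmod c)\<^sup>2 * b"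
    proof -
      have r1: "Re (s * cinner (A x) y) = t * (cmod c)\<^sup>2"
        using cmod_power2[of c] by (simp add: s_def c_def power2_eq_square algebra_simps)
      have r2: "Re (cnj s * cinner (A y) x) = t * (cmod c)\<^sup>2"
        using cmod_power2[of c] by (simp add: s_def Ayx power2_eq_square algebra_simps)
      have r3: "cnj s * s = complex_of_real (t\<^sup>2 * (cmod c)\<^sup>2)"
        using complex_norm_square[of c] by (simp add: s_def power2_eq_square algebra_simps)
      have r4: "cinner (A y) y = complex_of_real b" using positive_real[OF assms] by (simp add: b_def)
      show ?thesis using r1 r2 r3 r4 by (simp add: a_def)
    qed
    finally show ?thesis .
  qed
  have "(cmod c)\<^sup>2 \<le> a * b"
  proof (cases "(cmod c)\<^sup>2 * b = 0")
    case True
    then have "(cmod c)\<^sup>2 = 0 \<or> b = 0" by simp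
    then show ?thesis
    proof
      assume "(cmod c)\<^sup>2 = 0" then show ?thesis using nn[of x] nn[of y] by (simp add: a_def b_def)
    next
      assume b0: "b = 0"
      have "0 \<le> a - 2 * ((a + 1) / (cmod c)\<^sup>2) * (cmod c)\<^sup>2" if "c \<noteq> 0"
        using q[of "(a+1) / (cmod c)\<^sup>2"] b0 by simp
      then have "c = 0" using nn[of x] by (cases "c = 0") (auto simp: a_def)
      then show ?thesis using b0 by simp
    qed
  next
    case False
    then have cb: "(cmod c)\<^sup>2 * b > 0" using nn[of y] by (simp add: b_def less_le)
    have "0 \<le> a - 2 * (1/b) * (cmod c)\<^sup>2 + (1/b)\<^sup>2 * (cmod c)\<^sup>2 * b" by (rule q)
    moreover have bpos: "b > 0" using cb nn[of y] by (simp add: b_def zero_less_mult_iff)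
    moreover have "(1/b)\<^sup>2 * (cmod c)\<^sup>2 * b = (cmod c)\<^sup>2 / b" "2 * (1/b) * (cmod c)\<^sup>2 = 2 * ((cmod c)\<^sup>2 / b)"
      using bpos by (simp_all add: power2_eq_square field_simps)
    ultimately have "0 \<le> a - (cmod c)\<^sup>2 / b" by simp
    then show ?thesis using bpos by (simp add: field_simps)
  qed
  then show ?thesis by (simp add: c_def a_def b_def)
qed

lemma positive_kernel:
  assumes "positive_op A" "Re (cinner (A x) x) = 0"
  shows "A x = 0"
proof -
  have "(cmod (cinner (A x) (A x)))\<^sup>2 \<le> 0"
    using positive_CS[OF assms(1), of x "A x"] assms(2) by simp
  then have "cinner (A x) (A x) = 0" by simp
  then show ?thesis by (simp only: cinner_self_eq_zero)
qed

lemma positive_norm_bound: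
  assumes "positive_op A" "\<And>z. norm (A z) \<le> norm z * K"
  shows "(norm (A x))\<^sup>2 \<le> K * Re (cinner (A x) x)"
proof (cases "A x = 0")
  case True then show ?thesis using assms(1) by (simp add: positive_op_def)
next
  case False
  have "0 < norm (A x)" using False by simp
  then have "0 < norm x * K" using assms(2)[of x] by linarith
  then have K0: "K \<ge> 0" by (simp add: zero_less_mult_iff)
  have r0: "Re (cinner (A x) x) \<ge> 0" using assms(1) by (simp add: positive_op_def)
  have c1: "(cmod (cinner (A x) (A x)))\<^sup>2 \<le> Re (cinner (A x) x) * Re (cinner (A (A x)) (A x))"
    by (rule positive_CS[OF assms(1)])
  have c2: "Re (cinner (A (A x)) (A x)) \<le> norm (A (A x)) * norm (A x)"
    using complex_Re_le_cmod Cauchy_Schwarz order.trans by blast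
  have c3: "norm (A (A x)) * norm (A x) \<le> norm (A x) * K * norm (A x)" using assms(2) by (intro mult_right_mono) auto
  have c4: "cmod (cinner (A x) (A x)) = (norm (A x))\<^sup>2" by (simp only: cinner_self_eq norm_of_real) simp
  have "(norm (A x))\<^sup>2 * (norm (A x))\<^sup>2 \<le> Re (cinner (A x) x) * (norm (A x) * K * norm (A x))"
    using c1 c2 c3 c4 r0 mult_left_mono[of "Re (cinner (A (A x)) (A x))" "norm (A x) * K * norm (A x)" "Re (cinner (A x) x)"]
    by (simp add: power2_eq_square)
  then have "(norm (A x))\<^sup>2 * (norm (A x))\<^sup>2 \<le> (K * Re (cinner (A x) x)) * (norm (A x))\<^sup>2"
    by (simp add: power2_eq_square algebra_simps)
  moreover have "(norm (A x))\<^sup>2 > 0" using False by simp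
  ultimately show ?thesis by (rule mult_right_le_imp_le)
qed

lemma selfadj_closure_range:
  assumes "selfadj A"
  shows "closure (range A) = orth {x. A x = 0}"
proof -
  have bA: "cbounded A" and sa: "\<And>x y. cinner (A x) y = cinner x (A y)" using assms by (auto simp: selfadj_def)
  have lA: "clinear A" using bA by (rule cbounded_clinear)
  have cs: "csubspace (closure (range A))" by (intro csubspace_closure csubspace_range lA)
  interpret M: closed_csub "closure (range A)" using cs by unfold_locales auto
  have sub: "range A \<subseteq> orth {x. A x = 0}"
  proof
    fix v assume "v \<in> range A"
    then obtain y where y: "v = A y" by blast
    show "v \<in> orth {x. A x = 0}" unfolding orth_def
    proof (intro CollectI ballI)
      fix z assume "z \<in> {x. A x = 0}"
      then show "cinner z v = 0" using sa[of z y] y by simp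
    qed
  qed
  show ?thesis
  proof
    show "closure (range A) \<subseteq> orth {x. A x = 0}"
      using closure_minimal[OF sub orth_closed] .
  next
    show "orth {x. A x = 0} \<subseteq> closure (range A)"
    proof
      fix x assume x: "x \<in> orth {x. A x = 0}"
      define p where "p = orth_proj (closure (range A)) x"
      have "\<forall>y. cinner (A y) (x - p) = 0"
      proof
        fix y
        have "A y \<in> closure (range A)" using closure_subset[of "range A"] by blast
        then show "cinner (A y) (x - p) = 0" unfolding p_def by (rule M.proj_orth)
      qed
      then have "\<forall>y. cinner y (A (x - p)) = 0" using sa by simp
      then have "A (x - p) = 0" using cinner_eq_zero_iff by blast
      then have "cinner (x - p) x = 0" using x by (simp add: orth_def)
      moreover have "cinner (x - p) p = 0" unfolding p_def by (rule M.proj_orth'[OF M.proj_in])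
      ultimately have "cinner (x - p) (x - p) = 0" by (simp add: cinner_diff_right)
      then have "x - p = 0" by (simp only: cinner_self_eq_zero)
      then show "x \<in> closure (range A)" using M.proj_in[of x] by (simp add: p_def)
    qed
  qed
qed

subclass (in chilbert_space) banach ..

section \<open>Coefficients of the square root series\<close>


function sqc :: "nat \<Rightarrow> real" where
  "sqc n = (if n = 0 then 0 else if n = 1 then 1/2
            else (\<Sum>i\<in>{1..n-1}. sqc i * sqc (n - i)) / 2)"
  by auto
termination by (relation "Wellfounded.measure id") auto

declare sqc.simps[simp del]

lemma sqc_0[simp]: "sqc 0 = 0" by (simp add: sqc.simps)
lemma sqc_1[simp]: "sqc (Suc 0) = 1/2" by (simp add: sqc.simps)

lemma sqc_nonneg: "sqc n \<ge> 0"
proof (induction n rule: less_induct)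
  case (less n)
  show ?case
  proof (cases "n \<le> 1")
    case True then show ?thesis by (cases n) (auto simp: sqc.simps)
  next
    case False
    then have "(\<Sum>i\<in>{1..n-1}. sqc i * sqc (n - i)) \<ge> 0"
      by (intro sum_nonneg mult_nonneg_nonneg less) auto
    then show ?thesis using False by (simp add: sqc.simps)
  qed
qed

definition conv :: "nat \<Rightarrow> real" where "conv n = (\<Sum>i\<le>n. sqc i * sqc (n - i))"

lemma conv_eq: "conv n = 2 * sqc n - (if n = 1 then 1 else 0)"
proof (cases "n \<le> 1")
  case True then show ?thesis by (cases n) (auto simp: conv_def)
next
  case False
  then have n2: "n \<ge> 2" by simp
  have "{..n} = insert 0 (insert n {1..n-1})" using n2 by auto
  then have "conv n = sqc 0 * sqc n + (sqc n * sqc 0 + (\<Sum>i\<in>{1..n-1}. sqc i * sqc (n - i)))"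
    unfolding conv_def using n2 by (simp add: sum.insert)
  also have "\<dots> = (\<Sum>i\<in>{1..n-1}. sqc i * sqc (n - i))" by simp
  also have "\<dots> = 2 * sqc n" using False by (simp add: sqc.simps[of n])
  finally show ?thesis using n2 by simp
qed

definition sig :: "nat \<Rightarrow> real" where "sig N = (\<Sum>n\<le>N. sqc n)"

lemma tri_sum: "(\<Sum>(i,j)\<in>{(i,j). i + j \<le> N}. sqc i * sqc j) = (\<Sum>n\<le>N. conv n)"
  unfolding conv_def by (rule sum.triangle_reindex_eq)

lemma sum_conv: "N \<ge> 1 \<Longrightarrow> (\<Sum>n\<le>N. conv n) = 2 * sig N - 1"
proof (induction N)
  case 0 then show ?case by simp
next
  case (Suc N)
  show ?case
  proof (cases "N = 0")
    case True then show ?thesis by (simp add: conv_eq sig_def)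
  next
    case False
    then show ?thesis using Suc by (simp add: conv_eq sig_def)
  qed
qed

lemma box_sum: "(\<Sum>(i,j)\<in>{..N} \<times> {..N}. sqc i * sqc j) = (sig N)\<^sup>2"
  by (simp add: sig_def power2_eq_square sum_product sum.cartesian_product)

lemma tri_fin: "finite {(i,j). i + j \<le> (N::nat)}"
proof -
  have "{(i,j). i + j \<le> N} \<subseteq> {..N} \<times> {..N}" by auto
  then show ?thesis by (rule finite_subset) auto
qed

lemma sig_le1: "sig N \<le> 1"
proof (induction N)
  case 0 then show ?case by (simp add: sig_def)
next
  case (Suc N)
  have sub: "{(i,j). i + j \<le> Suc N} \<inter> ({..N} \<times> {..N}) \<subseteq> {..N} \<times> {..N}" by auto
  have "2 * sig (Suc N) - 1 = (\<Sum>(i,j)\<in>{(i,j). i + j \<le> Suc N}. sqc i * sqc j)"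
    by (subst tri_sum, subst sum_conv) auto
  also have "\<dots> = (\<Sum>(i,j)\<in>{(i,j). i + j \<le> Suc N} \<inter> ({..N} \<times> {..N}). sqc i * sqc j)"
  proof (rule sum.mono_neutral_right)
    show "finite {(i,j). i + j \<le> Suc N}" by (rule tri_fin)
    show "\<forall>p\<in>{(i,j). i + j \<le> Suc N} - {(i,j). i + j \<le> Suc N} \<inter> ({..N} \<times> {..N}).
            (case p of (i,j) \<Rightarrow> sqc i * sqc j) = 0"
    proof
      fix p assume "p \<in> {(i,j). i + j \<le> Suc N} - {(i,j). i + j \<le> Suc N} \<inter> ({..N} \<times> {..N})"
      then obtain i j where p: "p = (i,j)" "i + j \<le> Suc N" "\<not> (i \<le> N \<and> j \<le> N)" by auto
      then have "i = 0 \<or> j = 0" by auto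
      then show "(case p of (i,j) \<Rightarrow> sqc i * sqc j) = 0" using p by auto
    qed
  qed auto
  also have "\<dots> \<le> (\<Sum>(i,j)\<in>{..N} \<times> {..N}. sqc i * sqc j)"
    by (rule sum_mono2) (auto simp: sqc_nonneg)
  also have "\<dots> = (sig N)\<^sup>2" by (rule box_sum)
  also have "\<dots> \<le> 1"
  proof -
    have "sig N \<ge> 0" by (simp add: sig_def sum_nonneg sqc_nonneg)
    then show ?thesis using Suc by (simp add: power_le_one)
  qed
  finally show ?case by simp
qed

lemma sig_nonneg: "sig N \<ge> 0" by (simp add: sig_def sum_nonneg sqc_nonneg)

lemma sig_mono: "M \<le> N \<Longrightarrow> sig M \<le> sig N"
  unfolding sig_def by (rule sum_mono2) (auto simp: sqc_nonneg)

lemma summable_sqc: "summable sqc"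
proof (rule summableI_nonneg_bounded[where x=1])
  show "0 \<le> sqc n" for n by (rule sqc_nonneg)
  show "(\<Sum>i<n. sqc i) \<le> 1" for n
  proof (cases n)
    case 0 then show ?thesis by simp
  next
    case (Suc m)
    then have "(\<Sum>i<n. sqc i) = sig m" by (simp add: sig_def lessThan_Suc_atMost)
    then show ?thesis using sig_le1 by simp
  qed
qed

lemma sig_lim: "sig \<longlonglongrightarrow> 1"
proof -
  have l: "sig \<longlonglongrightarrow> suminf sqc" unfolding sig_def by (rule summable_LIMSEQ'[OF summable_sqc])
  define L where "L = suminf sqc"
  have sq: "(sig m)\<^sup>2 \<le> 2 * sig (2*m + 1) - 1" for m
  proof -
    have "(sig m)\<^sup>2 = (\<Sum>(i,j)\<in>{..m} \<times> {..m}. sqc i * sqc j)" by (rule box_sum[symmetric])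
    also have "\<dots> \<le> (\<Sum>(i,j)\<in>{(i,j). i + j \<le> 2*m+1}. sqc i * sqc j)"
      by (rule sum_mono2[OF tri_fin]) (auto simp: sqc_nonneg)
    also have "\<dots> = 2 * sig (2*m+1) - 1" by (subst tri_sum, subst sum_conv) auto
    finally show ?thesis .
  qed
  have l2: "(\<lambda>m. sig (2*m+1)) \<longlonglongrightarrow> L"
  proof -
    have "strict_mono (\<lambda>m::nat. 2*m+1)" by (auto simp: strict_mono_def)
    then show ?thesis using LIMSEQ_subseq_LIMSEQ[OF l[folded L_def]] by (simp add: o_def)
  qed
  have "L\<^sup>2 \<le> 2 * L - 1"
  proof (rule LIMSEQ_le[of "\<lambda>m. (sig m)\<^sup>2" _ "\<lambda>m. 2 * sig (2*m + 1) - 1"])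
    show "(\<lambda>m. (sig m)\<^sup>2) \<longlonglongrightarrow> L\<^sup>2" by (intro tendsto_intros l[folded L_def])
    show "(\<lambda>m. 2 * sig (2*m + 1) - 1) \<longlonglongrightarrow> 2 * L - 1" by (intro tendsto_intros l2)
  qed (use sq in auto)
  then have "(L - 1)\<^sup>2 \<le> 0" by (simp add: power2_eq_square algebra_simps)
  then have "L = 1" by simp
  then show ?thesis using l by (simp add: L_def)
qed


section \<open>Square root of a positive contraction-type operator\<close>

lemma tendsto_unique_seq: "(f \<longlongrightarrow> a) sequentially \<Longrightarrow> (f \<longlongrightarrow> b) sequentially \<Longrightarrow> a = b"
  for a b :: "'a::metric_space"
  by (rule LIMSEQ_unique)

lemma scaleC_sum_right: "scaleC c (\<Sum>i\<in>I. f i) = (\<Sum>i\<in>I. scaleC c (f i :: 'a::complex_vector))"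
  by (induction I rule: infinite_finite_induct) (auto simp: scaleC_add_right)

locale sqrt_data =
  fixes B :: "'a::chilbert_space \<Rightarrow> 'a"
  assumes Bpos: "positive_op B" and Ble: "\<And>x. Re (cinner (B x) x) \<le> (norm x)\<^sup>2"
begin

lemma Bb: "cbounded B" using Bpos by (simp add: positive_op_def)
lemma Blin: "clinear B" using Bb by (rule cbounded_clinear)
lemma Bsa: "cinner (B x) y = cinner x (B y)" using positive_selfadj[OF Bpos] by (simp add: selfadj_def)

lemma Bnorm: "norm (B x) \<le> norm x"
proof (cases "B x = 0")
  case True then show ?thesis by simp
next
  case False
  have "(cmod (cinner (B x) (B x)))\<^sup>2 \<le> Re (cinner (B x) x) * Re (cinner (B (B x)) (B x))"
    by (rule positive_CS[OF Bpos])
  moreover have "cmod (cinner (B x) (B x)) = (norm (B x))\<^sup>2" by (simp only: cinner_self_eq norm_of_real) simp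
  moreover have "Re (cinner (B x) x) * Re (cinner (B (B x)) (B x)) \<le> (norm x)\<^sup>2 * (norm (B x))\<^sup>2"
  proof (rule mult_mono)
    show "Re (cinner (B x) x) \<le> (norm x)\<^sup>2" by (rule Ble)
    show "Re (cinner (B (B x)) (B x)) \<le> (norm (B x))\<^sup>2" by (rule Ble)
    show "0 \<le> (norm x)\<^sup>2" by simp
    show "0 \<le> Re (cinner (B (B x)) (B x))" using Bpos by (simp add: positive_op_def)
  qed
  ultimately have "(norm (B x))\<^sup>2 * (norm (B x))\<^sup>2 \<le> (norm x)\<^sup>2 * (norm (B x))\<^sup>2"
    by (simp add: power2_eq_square)
  moreover have "(norm (B x))\<^sup>2 > 0" using False by simp
  ultimately have "(norm (B x))\<^sup>2 \<le> (norm x)\<^sup>2" by (rule mult_right_le_imp_le)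
  then show ?thesis using power2_le_imp_le[of "norm (B x)" "norm x"] by simp
qed

lemma Bp_norm: "norm ((B ^^ k) x) \<le> norm x"
proof (induction k)
  case 0 then show ?case by simp
next
  case (Suc k) then show ?case using Bnorm[of "(B ^^ k) x"] by simp
qed

lemma Bp_b: "cbounded (B ^^ k)" by (rule cbounded_funpow[OF Bb])
lemma Bp_lin: "clinear (B ^^ k)" using Bp_b by (rule cbounded_clinear)

lemma Bp_sa: "cinner ((B ^^ k) x) y = cinner x ((B ^^ k) y)"
proof (induction k arbitrary: x y)
  case 0 then show ?case by simp
next
  case (Suc k)
  have "cinner ((B ^^ Suc k) x) y = cinner ((B ^^ k) x) (B y)" by (simp add: Bsa)
  also have "\<dots> = cinner x ((B ^^ k) (B y))" by (rule Suc)
  finally show ?case by (simp add: funpow_swap1)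
qed

definition SN :: "nat \<Rightarrow> 'a \<Rightarrow> 'a" where
  "SN N x = (\<Sum>k\<le>N. sqc k *\<^sub>R (B ^^ k) x)"

definition Sop :: "'a \<Rightarrow> 'a" where
  "Sop x = (\<Sum>k. sqc k *\<^sub>R (B ^^ k) x)"

lemma summ: "summable (\<lambda>k. sqc k *\<^sub>R (B ^^ k) x)"
proof (rule summable_comparison_test'[where N=0])
  show "summable (\<lambda>k. sqc k * norm x)" by (rule summable_mult2[OF summable_sqc])
  show "norm (sqc k *\<^sub>R (B ^^ k) x) \<le> sqc k * norm x" for k
    using Bp_norm[of k x] sqc_nonneg[of k] by (simp add: mult_left_mono)
qed

lemma SN_lim: "(\<lambda>N. SN N x) \<longlonglongrightarrow> Sop x"
  unfolding SN_def Sop_def by (rule summable_LIMSEQ'[OF summ])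

lemma SN_norm: "norm (SN N x) \<le> norm x"
proof -
  have "norm (SN N x) \<le> (\<Sum>k\<le>N. norm (sqc k *\<^sub>R (B ^^ k) x))" unfolding SN_def by (rule norm_sum)
  also have "\<dots> \<le> (\<Sum>k\<le>N. sqc k * norm x)"
    by (rule sum_mono) (use Bp_norm sqc_nonneg in \<open>simp add: mult_left_mono\<close>)
  also have "\<dots> = sig N * norm x" by (simp add: sig_def sum_distrib_right)
  also have "\<dots> \<le> norm x" using sig_le1[of N] mult_right_mono[of "sig N" 1 "norm x"] by simp
  finally show ?thesis .
qed

lemma Sop_norm: "norm (Sop x) \<le> norm x"
  by (rule LIMSEQ_le_const2[OF tendsto_norm[OF SN_lim]]) (use SN_norm in auto)

lemma SN_add: "SN N (x + y) = SN N x + SN N y"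
  by (simp add: SN_def clinear_add[OF Bp_lin] scaleR_add_right sum.distrib)

lemma SN_scaleC: "SN N (scaleC c x) = scaleC c (SN N x)"
  by (simp add: SN_def clinear_scaleC[OF Bp_lin] scaleC_sum_right scaleC_scaleR_commute)

lemma SN_diff: "SN N (x - y) = SN N x - SN N y"
  by (simp add: SN_def clinear_diff[OF Bp_lin] scaleR_diff_right sum_subtractf)

lemma Sop_add: "Sop (x + y) = Sop x + Sop y"
proof -
  have "(\<lambda>N. SN N (x + y)) \<longlonglongrightarrow> Sop x + Sop y"
    unfolding SN_add by (intro tendsto_add SN_lim)
  then show ?thesis using SN_lim[of "x+y"] LIMSEQ_unique by blast
qed

lemma Sop_scaleC: "Sop (scaleC c x) = scaleC c (Sop x)"
proof -
  have "(\<lambda>N. SN N (scaleC c x)) \<longlonglongrightarrow> scaleC c (Sop x)"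
    unfolding SN_scaleC by (rule bounded_linear.tendsto[OF bounded_linear_scaleC SN_lim])
  then show ?thesis using SN_lim[of "scaleC c x"] LIMSEQ_unique by blast
qed

lemma Sop_b: "cbounded Sop"
  by (rule cboundedI[where K=1]) (auto simp: Sop_add Sop_scaleC Sop_norm)

lemma SN_sa: "cinner (SN N x) y = cinner x (SN N y)"
  by (simp add: SN_def cinner_sum_left cinner_sum_right cinner_scaleR_left cinner_scaleR_right Bp_sa)

lemma Sop_sa: "cinner (Sop x) y = cinner x (Sop y)"
proof -
  have "(\<lambda>N. cinner (SN N x) y) \<longlonglongrightarrow> cinner (Sop x) y" by (intro tendsto_cinner SN_lim tendsto_const)
  moreover have "(\<lambda>N. cinner (SN N x) y) \<longlonglongrightarrow> cinner x (Sop y)"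
    unfolding SN_sa by (intro tendsto_cinner SN_lim tendsto_const)
  ultimately show ?thesis using LIMSEQ_unique by blast
qed

lemma SN_comm:
  assumes C: "cbounded C" and CB: "\<And>x. C (B x) = B (C x)"
  shows "C (SN N x) = SN N (C x)"
proof -
  have lC: "clinear C" using C by (rule cbounded_clinear)
  have Cp: "C ((B ^^ k) x) = (B ^^ k) (C x)" for k x
    by (induction k) (auto simp: CB)
  show ?thesis by (simp add: SN_def clinear_sum[OF lC] clinear_scaleR[OF lC] Cp)
qed

lemma Sop_comm:
  assumes C: "cbounded C" and CB: "\<And>x. C (B x) = B (C x)"
  shows "C (Sop x) = Sop (C x)"
proof -
  have "(\<lambda>N. C (SN N x)) \<longlonglongrightarrow> C (Sop x)" by (rule cbounded_tendsto[OF C SN_lim])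
  then have "(\<lambda>N. SN N (C x)) \<longlonglongrightarrow> C (Sop x)" by (simp add: SN_comm[OF C CB])
  then show ?thesis using SN_lim[of "C x"] LIMSEQ_unique by blast
qed

lemma SN_sq:
  assumes N: "N \<ge> 1"
  shows "norm (SN N (SN N x) - (2 *\<^sub>R SN N x - B x)) \<le> ((sig N)\<^sup>2 - (2 * sig N - 1)) * norm x"
proof -
  define g where "g = (\<lambda>(i,j). (sqc i * sqc j) *\<^sub>R (B ^^ (i + j)) x)"
  define box where "box = {..N} \<times> {..N}"
  define tri where "tri = {(i,j). i + j \<le> N}"
  have tb: "tri \<subseteq> box" by (auto simp: tri_def box_def)
  have fb: "finite box" by (simp add: box_def)
  have "SN N (SN N x) = (\<Sum>i\<le>N. \<Sum>j\<le>N. (sqc i * sqc j) *\<^sub>R (B ^^ (i + j)) x)"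
    by (simp add: SN_def clinear_sum[OF Bp_lin] clinear_scaleR[OF Bp_lin] scaleR_sum_right funpow_add)
  also have "\<dots> = sum g box" by (simp add: box_def g_def sum.cartesian_product)
  also have "\<dots> = sum g (box - tri) + sum g tri" by (rule sum.subset_diff[OF tb fb])
  finally have e1: "SN N (SN N x) = sum g (box - tri) + sum g tri" .
  have "sum g tri = (\<Sum>n\<le>N. \<Sum>i\<le>n. (sqc i * sqc (n - i)) *\<^sub>R (B ^^ (i + (n - i))) x)"
    unfolding g_def tri_def by (rule sum.triangle_reindex_eq)
  also have "\<dots> = (\<Sum>n\<le>N. conv n *\<^sub>R (B ^^ n) x)"
    by (simp add: conv_def scaleR_sum_left)
  also have "\<dots> = (\<Sum>n\<le>N. (2 * sqc n) *\<^sub>R (B ^^ n) x - (if n = 1 then (B ^^ n) x else 0))"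
    by (rule sum.cong) (auto simp: conv_eq scaleR_diff_left)
  also have "\<dots> = (\<Sum>n\<le>N. (2 * sqc n) *\<^sub>R (B ^^ n) x) - (\<Sum>n\<le>N. (if n = 1 then (B ^^ n) x else 0))"
    by (rule sum_subtractf)
  also have "(\<Sum>n\<le>N. (if n = 1 then (B ^^ n) x else 0)) = B x"
    using N by (subst sum.delta) auto
  also have "(\<Sum>n\<le>N. (2 * sqc n) *\<^sub>R (B ^^ n) x) = 2 *\<^sub>R SN N x"
    by (simp add: SN_def scaleR_sum_right)
  finally have e2: "sum g tri = 2 *\<^sub>R SN N x - B x" .
  have "norm (sum g (box - tri)) \<le> (\<Sum>p\<in>box - tri. norm (g p))" by (rule norm_sum)
  also have "\<dots> \<le> (\<Sum>p\<in>box - tri. (case p of (i,j) \<Rightarrow> sqc i * sqc j) * norm x)"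
  proof (rule sum_mono)
    fix p assume "p \<in> box - tri"
    obtain i j where p: "p = (i,j)" by (cases p)
    show "norm (g p) \<le> (case p of (i,j) \<Rightarrow> sqc i * sqc j) * norm x"
      using Bp_norm[of "i+j" x] sqc_nonneg[of i] sqc_nonneg[of j]
      by (simp add: p g_def mult_left_mono)
  qed
  also have "\<dots> = ((\<Sum>p\<in>box. case p of (i,j) \<Rightarrow> sqc i * sqc j) - (\<Sum>p\<in>tri. case p of (i,j) \<Rightarrow> sqc i * sqc j)) * norm x"
    by (simp add: sum_distrib_right[symmetric] sum_diff[OF fb tb])
  also have "(\<Sum>p\<in>box. case p of (i,j) \<Rightarrow> sqc i * sqc j) = (sig N)\<^sup>2" unfolding box_def by (rule box_sum)
  also have "(\<Sum>p\<in>tri. case p of (i,j) \<Rightarrow> sqc i * sqc j) = 2 * sig N - 1"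
    unfolding tri_def using N by (subst tri_sum, subst sum_conv) auto
  finally have "norm (sum g (box - tri)) \<le> ((sig N)\<^sup>2 - (2 * sig N - 1)) * norm x" .
  then show ?thesis using e1 e2 by simp
qed

lemma Sop_sq: "Sop (Sop x) = 2 *\<^sub>R Sop x - B x"
proof -
  have l1: "(\<lambda>N. SN N (SN N x)) \<longlonglongrightarrow> Sop (Sop x)"
  proof -
    have a: "(\<lambda>N. SN N (Sop x)) \<longlonglongrightarrow> Sop (Sop x)" by (rule SN_lim)
    have "(\<lambda>N. SN N x - Sop x) \<longlonglongrightarrow> 0"
      using SN_lim[of x] by (simp add: LIM_zero)
    then have "(\<lambda>N. norm (SN N x - Sop x)) \<longlonglongrightarrow> 0" by (simp add: tendsto_norm_zero)
    then have b: "(\<lambda>N. SN N (SN N x - Sop x)) \<longlonglongrightarrow> 0"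
      by (rule Lim_null_comparison[rotated]) (use SN_norm in auto)
    have "(\<lambda>N. SN N (Sop x) + SN N (SN N x - Sop x)) \<longlonglongrightarrow> Sop (Sop x) + 0"
      by (rule tendsto_add[OF a b])
    then show ?thesis by (simp add: SN_diff)
  qed
  have l2: "(\<lambda>N. SN N (SN N x)) \<longlonglongrightarrow> 2 *\<^sub>R Sop x - B x"
  proof -
    have "(\<lambda>N. ((sig N)\<^sup>2 - (2 * sig N - 1)) * norm x) \<longlonglongrightarrow> (1\<^sup>2 - (2 * 1 - 1)) * norm x"
      by (intro tendsto_intros sig_lim)
    then have c0: "(\<lambda>N. ((sig N)\<^sup>2 - (2 * sig N - 1)) * norm x) \<longlonglongrightarrow> 0" by simp
    have c: "(\<lambda>N. SN N (SN N x) - (2 *\<^sub>R SN N x - B x)) \<longlonglongrightarrow> 0"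
    proof (rule Lim_null_comparison[OF _ c0])
      show "\<forall>\<^sub>F N in sequentially. norm (SN N (SN N x) - (2 *\<^sub>R SN N x - B x)) \<le> ((sig N)\<^sup>2 - (2 * sig N - 1)) * norm x"
        using SN_sq eventually_sequentially by blast
    qed
    have d: "(\<lambda>N. 2 *\<^sub>R SN N x - B x) \<longlonglongrightarrow> 2 *\<^sub>R Sop x - B x"
      by (intro tendsto_intros SN_lim)
    have "(\<lambda>N. (SN N (SN N x) - (2 *\<^sub>R SN N x - B x)) + (2 *\<^sub>R SN N x - B x)) \<longlonglongrightarrow> 0 + (2 *\<^sub>R Sop x - B x)"
      by (rule tendsto_add[OF c d])
    then show ?thesis by simp
  qed
  show ?thesis using l1 l2 LIMSEQ_unique by blast
qed

definition Rop :: "'a \<Rightarrow> 'a" where "Rop x = x - Sop x"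

lemma Rop_b: "cbounded Rop"
  unfolding Rop_def by (rule cbounded_diff[OF cbounded_id Sop_b])

lemma Rop_sq: "Rop (Rop x) = x - B x"
proof -
  have "Rop (Rop x) = x - Sop x - Sop (x - Sop x)" by (simp add: Rop_def)
  also have "Sop (x - Sop x) = Sop x - Sop (Sop x)"
    using clinear_diff[OF cbounded_clinear[OF Sop_b]] by blast
  finally show ?thesis by (simp add: Sop_sq scaleR_2 algebra_simps)
qed

lemma Rop_sa: "cinner (Rop x) y = cinner x (Rop y)"
  by (simp add: Rop_def cinner_diff_left cinner_diff_right Sop_sa)

lemma Rop_pos: "positive_op Rop"
  unfolding positive_op_def
proof (intro conjI allI Rop_b)
  fix x
  have "cinner (Rop x) x = cnj (cinner (Rop x) x)"
    using Rop_sa[of x x] cinner_commute[of x "Rop x"] by simp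
  then show "Im (cinner (Rop x) x) = 0" by (metis cnj.simps(2) complex_cnj_cancel_iff neg_equal_zero)
  have "Re (cinner (Sop x) x) \<le> cmod (cinner (Sop x) x)" by (rule complex_Re_le_cmod)
  also have "\<dots> \<le> norm (Sop x) * norm x" by (rule Cauchy_Schwarz)
  also have "\<dots> \<le> norm x * norm x" using Sop_norm by (intro mult_right_mono) auto
  finally show "0 \<le> Re (cinner (Rop x) x)"
    by (simp add: Rop_def cinner_diff_left Re_cinner_self power2_eq_square)
qed

lemma Rop_comm:
  assumes C: "cbounded C" and CB: "\<And>x. C (B x) = B (C x)"
  shows "C (Rop x) = Rop (C x)"
  using Sop_comm[OF C CB] clinear_diff[OF cbounded_clinear[OF C]] by (simp add: Rop_def)

end

lemma sqrt_exists:
  fixes A :: "'a::chilbert_space \<Rightarrow> 'a"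
  assumes A: "positive_op A"
  shows "\<exists>R. positive_op R \<and> (\<forall>x. R (R x) = A x) \<and>
           (\<forall>C. cbounded C \<longrightarrow> (\<forall>x. C (A x) = A (C x)) \<longrightarrow> (\<forall>x. C (R x) = R (C x)))"
proof -
  have bA: "cbounded A" using A by (simp add: positive_op_def)
  obtain K where K: "K > 0" "\<And>x. norm (A x) \<le> norm x * K" using cbounded_pos_bound[OF bA] by blast
  define B where "B x = x - (1/K) *\<^sub>R A x" for x
  have bB: "cbounded B" unfolding B_def by (intro cbounded_diff cbounded_id cbounded_scaleR bA)
  have AK: "Re (cinner (A x) x) \<le> K * (norm x)\<^sup>2" for x
  proof -
    have "Re (cinner (A x) x) \<le> cmod (cinner (A x) x)" by (rule complex_Re_le_cmod)
    also have "\<dots> \<le> norm (A x) * norm x" by (rule Cauchy_Schwarz)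
    also have "\<dots> \<le> norm x * K * norm x" using K by (intro mult_right_mono) auto
    finally show ?thesis by (simp add: power2_eq_square algebra_simps)
  qed
  have ReB: "Re (cinner (B x) x) = (norm x)\<^sup>2 - Re (cinner (A x) x) / K" for x
    by (simp add: B_def cinner_diff_left cinner_scaleR_left Re_cinner_self)
  have ImB: "Im (cinner (B x) x) = 0" for x
    using A by (simp add: B_def cinner_diff_left cinner_scaleR_left cinner_self_eq positive_op_def)
  have Bpos: "positive_op B"
    unfolding positive_op_def
  proof (intro conjI allI bB ImB)
    fix x
    have "Re (cinner (A x) x) / K \<le> (norm x)\<^sup>2" using AK[of x] K by (simp add: field_simps)
    then show "0 \<le> Re (cinner (B x) x)" by (simp add: ReB)
  qed
  have Ble: "Re (cinner (B x) x) \<le> (norm x)\<^sup>2" for x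
    using A K by (simp add: ReB positive_op_def)
  interpret sqrt_data B using Bpos Ble by unfold_locales
  define R where "R x = sqrt K *\<^sub>R Rop x" for x
  have Rb: "cbounded R" unfolding R_def by (intro cbounded_scaleR Rop_b)
  have "positive_op R"
    unfolding positive_op_def
  proof (intro conjI allI Rb)
    fix x
    have "Im (cinner (Rop x) x) = 0" "0 \<le> Re (cinner (Rop x) x)" using Rop_pos by (auto simp: positive_op_def)
    then show "Im (cinner (R x) x) = 0" "0 \<le> Re (cinner (R x) x)"
      using K by (auto simp: R_def cinner_scaleR_left)
  qed
  moreover have "R (R x) = A x" for x
  proof -
    have "R (R x) = (sqrt K * sqrt K) *\<^sub>R Rop (Rop x)"
      by (simp add: R_def clinear_scaleR[OF cbounded_clinear[OF Rop_b]])
    also have "\<dots> = K *\<^sub>R (x - B x)" using K by (simp add: Rop_sq)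
    also have "\<dots> = A x" using K by (simp add: B_def)
    finally show ?thesis .
  qed
  moreover have "C (R x) = R (C x)" if C: "cbounded C" and CA: "\<forall>x. C (A x) = A (C x)" for C x
  proof -
    have lC: "clinear C" using C by (rule cbounded_clinear)
    have CB: "C (B y) = B (C y)" for y using CA by (simp add: B_def clinear_diff[OF lC] clinear_scaleR[OF lC])
    show ?thesis by (simp add: R_def clinear_scaleR[OF lC] Rop_comm[OF C CB])
  qed
  ultimately show ?thesis by blast
qed

lemma sqrt_unique_aux:
  fixes A :: "'a::chilbert_space \<Rightarrow> 'a"
  assumes A: "positive_op A" and C: "positive_op C" and CC: "\<And>x. C (C x) = A x"
    and R: "positive_op R" and RR: "\<And>x. R (R x) = A x"
    and CR: "\<And>x. C (R x) = R (C x)"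
  shows "C x = R x"
proof -
  have lC: "clinear C" using C by (simp add: positive_op_def cbounded_clinear)
  have lR: "clinear R" using R by (simp add: positive_op_def cbounded_clinear)
  have saC: "\<And>x y. cinner (C x) y = cinner x (C y)" using positive_selfadj[OF C] by (simp add: selfadj_def)
  have saR: "\<And>x y. cinner (R x) y = cinner x (R y)" using positive_selfadj[OF R] by (simp add: selfadj_def)
  define y where "y = C x - R x"
  have sum0: "C y + R y = 0"
    by (simp add: y_def clinear_diff[OF lC] clinear_diff[OF lR] CC RR CR)
  have "Re (cinner (C y) y) + Re (cinner (R y) y) = Re (cinner (C y + R y) y)"
    by (simp add: cinner_add_left)
  also have "\<dots> = 0" by (simp add: sum0)
  finally have s: "Re (cinner (C y) y) + Re (cinner (R y) y) = 0" .
  have "Re (cinner (C y) y) \<ge> 0" "Re (cinner (R y) y) \<ge> 0" using C R by (auto simp: positive_op_def)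
  then have "Re (cinner (C y) y) = 0" "Re (cinner (R y) y) = 0" using s by linarith+
  then have Cy: "C y = 0" and Ry: "R y = 0" using positive_kernel C R by blast+
  have "cinner y y = cinner (C x) y - cinner (R x) y" by (simp add: y_def cinner_diff_left)
  also have "\<dots> = cinner x (C y) - cinner x (R y)" by (simp add: saC saR)
  also have "\<dots> = 0" by (simp add: Cy Ry)
  finally have "y = 0" by (simp only: cinner_self_eq_zero)
  then show ?thesis by (simp add: y_def)
qed

locale posop =
  fixes A :: "'a::chilbert_space \<Rightarrow> 'a"
  assumes A: "positive_op A"
begin

lemma Ab: "cbounded A" using A by (simp add: positive_op_def)
lemma Alin: "clinear A" using Ab by (rule cbounded_clinear)
lemma Asa: "cinner (A x) y = cinner x (A y)" using positive_selfadj[OF A] by (simp add: selfadj_def)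

lemma sqrt_char:
  "positive_op (op_sqrt A) \<and> (\<forall>x. op_sqrt A (op_sqrt A x) = A x) \<and>
   (\<forall>C. cbounded C \<longrightarrow> (\<forall>x. C (A x) = A (C x)) \<longrightarrow> (\<forall>x. C (op_sqrt A x) = op_sqrt A (C x)))"
proof -
  obtain R where R: "positive_op R" "\<forall>x. R (R x) = A x"
    "\<forall>C. cbounded C \<longrightarrow> (\<forall>x. C (A x) = A (C x)) \<longrightarrow> (\<forall>x. C (R x) = R (C x))"
    using sqrt_exists[OF A] by blast
  have "op_sqrt A = R"
    unfolding op_sqrt_def
  proof (rule the_equality)
    show "positive_op R \<and> R \<circ> R = A" using R by (auto simp: o_def)
  next
    fix C assume C: "positive_op C \<and> C \<circ> C = A"
    then have CC: "\<And>x. C (C x) = A x" by (metis comp_apply)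
    have Cb: "cbounded C" using C by (simp add: positive_op_def)
    have "\<forall>x. C (A x) = A (C x)" using CC by metis
    then have CR: "\<And>x. C (R x) = R (C x)" using R(3) Cb by blast
    show "C = R"
      by (rule ext, rule sqrt_unique_aux[OF A _ CC R(1)]) (use C R(2) CR in auto)
  qed
  then show ?thesis using R by simp
qed

abbreviation "R \<equiv> op_sqrt A"

lemma R_pos: "positive_op R" using sqrt_char by blast
lemma R_sq: "R (R x) = A x" using sqrt_char by blast
lemma R_comm: "cbounded C \<Longrightarrow> (\<And>x. C (A x) = A (C x)) \<Longrightarrow> C (R x) = R (C x)"
  using sqrt_char by blast
lemma Rb: "cbounded R" using R_pos by (simp add: positive_op_def)
lemma Rlin: "clinear R" using Rb by (rule cbounded_clinear)
lemma Rsa: "cinner (R x) y = cinner x (R y)" using positive_selfadj[OF R_pos] by (simp add: selfadj_def)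

lemma R_kernel: "R x = 0 \<longleftrightarrow> A x = 0"
proof
  assume "R x = 0" then show "A x = 0" using R_sq[of x] clinear_zero[OF Rlin] by simp
next
  assume "A x = 0"
  then have "cinner (R x) (R x) = 0" by (simp add: Rsa R_sq)
  then show "R x = 0" by (simp only: cinner_self_eq_zero)
qed

definition "M = closure (range A)"

lemma M_eq: "M = orth {x. A x = 0}"
  unfolding M_def by (rule selfadj_closure_range[OF positive_selfadj[OF A]])

lemma M_cs: "closed_csub M"
  unfolding M_def by unfold_locales (auto intro: csubspace_closure csubspace_range Alin)

sublocale Mc: closed_csub M by (rule M_cs)

abbreviation "Q \<equiv> orth_proj M"

lemma Qb: "cbounded Q" by (rule Mc.proj_cbounded)
lemma Qlin: "clinear Q" using Qb by (rule cbounded_clinear)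

lemma ker_Q: "A z = 0 \<Longrightarrow> Q z = 0"
proof -
  assume z: "A z = 0"
  have "z \<in> orth M"
    unfolding orth_def
  proof (intro CollectI ballI)
    fix m assume "m \<in> M"
    then have "cinner z m = 0" using z by (simp add: M_eq orth_def)
    then show "cinner m z = 0" using cinner_commute[of m z] by simp
  qed
  then show "Q z = 0" by (simp add: Mc.proj_zero_iff)
qed

lemma A_in_M: "A x \<in> M"
proof -
  have "A x \<in> range A" by (rule rangeI)
  then show ?thesis unfolding M_def using closure_subset[of "range A"] by (rule subsetD[rotated])
qed

lemma A_diffQ: "A (x - Q x) = 0"
proof -
  have "\<forall>y. cinner y (A (x - Q x)) = 0"
  proof
    fix y
    have "A y \<in> M" by (rule A_in_M)
    then have "cinner (A y) (x - Q x) = 0" by (rule Mc.proj_orth)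
    then show "cinner y (A (x - Q x)) = 0" by (simp add: Asa)
  qed
  then show ?thesis using cinner_eq_zero_iff[of "A (x - Q x)"] by simp
qed

lemma A_Q: "A (Q x) = A x"
  using A_diffQ[of x] clinear_diff[OF Alin] by simp

lemma R_Q: "R (Q x) = R x"
  using A_diffQ[of x] R_kernel[of "x - Q x"] clinear_diff[OF Rlin] by simp


lemma Q_A: "Q (A x) = A x" by (rule Mc.proj_id[OF A_in_M])

lemma R_in_M: "R x \<in> M"
  unfolding M_eq orth_def
proof (intro CollectI ballI)
  fix z assume "z \<in> {x. A x = 0}"
  then have "R z = 0" using R_kernel by simp
  then show "cinner z (R x) = 0" by (simp add: Rsa[symmetric])
qed

lemma Q_R: "Q (R x) = R x" by (rule Mc.proj_id[OF R_in_M])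

lemma regular_key:
  assumes T: "cbounded T" and r0: "regular A T"
  shows "R (T z) = Q (T (R z))"
proof -
  have r: "\<And>x. A (T x) = R (T (R x))" using r0 unfolding regular_def by (auto simp: fun_eq_iff)
  have "R (R (T z) - T (R z)) = 0"
    by (simp add: clinear_diff[OF Rlin] R_sq r)
  then have "A (R (T z) - T (R z)) = 0" using R_kernel by blast
  then have "Q (R (T z) - T (R z)) = 0" by (rule ker_Q)
  then have "Q (R (T z)) = Q (T (R z))" by (simp add: clinear_diff[OF Qlin])
  then show ?thesis by (simp add: Q_R)
qed

lemma closure_range_R: "closure (range R) = M"
proof -
  have "closure (range R) = orth {x. R x = 0}"
    by (rule selfadj_closure_range[OF positive_selfadj[OF R_pos]])
  also have "{x. R x = 0} = {x. A x = 0}" using R_kernel by blast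
  finally show ?thesis by (simp add: M_eq)
qed

lemma Re_A_R: "Re (cinner (A x) x) = (norm (R x))\<^sup>2"
proof -
  have "cinner (A x) x = cinner (R x) (R x)" by (simp add: R_sq[symmetric] Rsa)
  then show ?thesis by (simp add: Re_cinner_self)
qed

lemma regular_iff:
  assumes T: "cbounded T"
  shows "regular A T \<longleftrightarrow> (\<forall>x. A x = 0 \<longrightarrow> A (T x) = 0) \<and> (\<forall>x. A (Q (T (Q x))) = Q (T (Q (A x))))"
proof -
  have lT: "clinear T" using T by (rule cbounded_clinear)
  have reg: "regular A T \<longleftrightarrow> (\<forall>x. A (T x) = R (T (R x)))"
    unfolding regular_def by (auto simp: fun_eq_iff)
  show ?thesis
  proof
    assume "regular A T"
    then have r: "\<And>x. A (T x) = R (T (R x))" using reg by blast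
    have k: "\<forall>x. A x = 0 \<longrightarrow> A (T x) = 0"
    proof (intro allI impI)
      fix x assume "A x = 0"
      then have "R x = 0" using R_kernel by blast
      then show "A (T x) = 0" using r[of x] clinear_zero[OF lT] clinear_zero[OF Rlin] by simp
    qed
    have key: "R (T z) = Q (T (R z))" for z
    proof -
      have "R (R (T z) - T (R z)) = 0"
        by (simp add: clinear_diff[OF Rlin] R_sq r)
      then have "A (R (T z) - T (R z)) = 0" using R_kernel by blast
      then have "Q (R (T z) - T (R z)) = 0" by (rule ker_Q)
      then have "Q (R (T z)) = Q (T (R z))" by (simp add: clinear_diff[OF Qlin])
      then show ?thesis by (simp add: Q_R)
    qed
    have h: "A (Q (T (Q x))) = Q (T (Q (A x)))" for x
    proof -
      have "A (Q (T (Q x))) = R (R (T (Q x)))" by (simp add: A_Q R_sq)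
      also have "\<dots> = R (Q (T (R (Q x))))" by (simp add: key)
      also have "\<dots> = R (T (R (Q x)))" by (simp add: R_Q)
      also have "\<dots> = Q (T (R (R (Q x))))" by (simp add: key)
      also have "\<dots> = Q (T (Q (A x)))" by (simp add: R_sq A_Q Q_A)
      finally show ?thesis .
    qed
    show "(\<forall>x. A x = 0 \<longrightarrow> A (T x) = 0) \<and> (\<forall>x. A (Q (T (Q x))) = Q (T (Q (A x))))"
      by (rule conjI[OF k], rule allI, rule h)
  next
    assume as: "(\<forall>x. A x = 0 \<longrightarrow> A (T x) = 0) \<and> (\<forall>x. A (Q (T (Q x))) = Q (T (Q (A x))))"
    define U where "U x = Q (T (Q x))" for x
    have Ub: "cbounded U" unfolding U_def by (rule cbounded_comp[OF Qb cbounded_comp[OF T Qb]])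
    have UA: "U (A x) = A (U x)" for x using as by (simp add: U_def)
    have UR: "U (R x) = R (U x)" for x by (rule R_comm[OF Ub UA])
    have RT: "R (T x) = Q (T (R x))" for x
    proof -
      have "A (T (x - Q x)) = 0" using as[THEN conjunct1, rule_format, OF A_diffQ] .
      then have "R (T (x - Q x)) = 0" using R_kernel by blast
      then have "R (T x) = R (T (Q x))" by (simp add: clinear_diff[OF lT] clinear_diff[OF Rlin])
      also have "\<dots> = R (U x)" by (simp add: U_def R_Q)
      also have "\<dots> = U (R x)" by (simp add: UR)
      also have "\<dots> = Q (T (R x))" by (simp add: U_def Q_R)
      finally show ?thesis .
    qed
    have "A (T x) = R (T (R x))" for x
    proof -
      have "A (T x) = R (R (T x))" by (simp add: R_sq)
      also have "\<dots> = R (Q (T (R x)))" by (simp only: RT)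
      also have "\<dots> = R (T (R x))" by (rule R_Q)
      finally show ?thesis .
    qed
    then show "regular A T" using reg by blast
  qed
qed

end

lemma adjoint_on_compression:
  fixes T :: "'a::chilbert_space \<Rightarrow> 'a"
  assumes V: "closed_csub V" and T: "cbounded T"
  shows "adjoint_on V (compression V T) = (\<lambda>y. if y \<in> V then orth_proj V (cadjoint T y) else 0)"
proof -
  interpret V: closed_csub V by (rule V)
  interpret bop T by (unfold_locales) (rule T)
  define S' where "S' = (\<lambda>y. if y \<in> V then orth_proj V (cadjoint T y) else 0)"
  have P: "(\<forall>x. x \<notin> V \<longrightarrow> S' x = 0) \<and> (\<forall>x\<in>V. S' x \<in> V) \<and>
      (\<forall>x\<in>V. \<forall>y\<in>V. cinner (compression V T x) y = cinner x (S' y))"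
  proof (intro conjI ballI allI impI)
    fix x assume "x \<notin> V" then show "S' x = 0" by (simp add: S'_def)
  next
    fix x assume "x \<in> V" then show "S' x \<in> V" by (simp add: S'_def V.proj_in)
  next
    fix x y assume x: "x \<in> V" and y: "y \<in> V"
    have "cinner (compression V T x) y = cinner (orth_proj V (T x)) y" using x by (simp add: compression_def)
    also have "\<dots> = cinner (T x) (orth_proj V y)" by (rule V.proj_selfadj)
    also have "\<dots> = cinner (T x) y" using y by (simp add: V.proj_id)
    also have "\<dots> = cinner x (cadjoint T y)" by (rule adj)
    also have "\<dots> = cinner (orth_proj V x) (cadjoint T y)" using x by (simp add: V.proj_id)
    also have "\<dots> = cinner x (orth_proj V (cadjoint T y))" by (rule V.proj_selfadj)
    finally show "cinner (compression V T x) y = cinner x (S' y)" using y by (simp add: S'_def)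
  qed
  show ?thesis
    unfolding adjoint_on_def S'_def[symmetric]
  proof (rule the_equality)
    show "(\<forall>x. x \<notin> V \<longrightarrow> S' x = 0) \<and> (\<forall>x\<in>V. S' x \<in> V) \<and>
      (\<forall>x\<in>V. \<forall>y\<in>V. cinner (compression V T x) y = cinner x (S' y))" by (rule P)
  next
    fix S'' assume S'': "(\<forall>x. x \<notin> V \<longrightarrow> S'' x = 0) \<and> (\<forall>x\<in>V. S'' x \<in> V) \<and>
      (\<forall>x\<in>V. \<forall>y\<in>V. cinner (compression V T x) y = cinner x (S'' y))"
    show "S'' = S'"
    proof
      fix y
      show "S'' y = S' y"
      proof (cases "y \<in> V")
        case False then show ?thesis using S'' P by simp
      next
        case True
        define d where "d = S'' y - S' y"
        have dV: "d \<in> V" using S'' P True V.csub by (simp add: d_def csubspace_diff)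
        have "cinner d (S'' y) = cinner d (S' y)"
          using S'' P True dV by (metis (no_types, lifting))
        then have "cinner d d = 0" by (simp add: d_def cinner_diff_right)
        then have "d = 0" by (simp only: cinner_self_eq_zero)
        then show ?thesis by (simp add: d_def)
      qed
    qed
  qed
qed

locale che =
  fixes T :: "'a::chilbert_space \<Rightarrow> 'a"
  assumes T: "cbounded T" and CHE: "completely_hyperexpansive T"
begin

sublocale bop T by unfold_locales (rule T)

abbreviation "Ts \<equiv> cadjoint T"

lemma Tlin: "clinear T" by (rule lin)

lemma A_pos: "n \<ge> 1 \<Longrightarrow> positive_op (A_op T n)"
proof -
  assume "n \<ge> 1"
  then have "op_le (hyp_sum T n) (\<lambda>_. 0)" using CHE by (simp add: completely_hyperexpansive_def)
  then have "positive_op (\<lambda>x. 0 - hyp_sum T n x)" by (simp add: op_le_def)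
  moreover have "(\<lambda>x. 0 - hyp_sum T n x) = A_op T n" by (simp add: A_op_def fun_eq_iff)
  ultimately show ?thesis by simp
qed

lemma hyp_rec: "hyp_sum T (Suc n) x = hyp_sum T n x - Ts (hyp_sum T n (T x))"
proof -
  define c where "c n j = (-1) ^ j * real (n choose j)" for n j :: nat
  define v where "v j = (Ts ^^ j) ((T ^^ j) x)" for j
  have hyp: "hyp_sum T m y = (\<Sum>j\<le>m. c m j *\<^sub>R (Ts ^^ j) ((T ^^ j) y))" for m y
    by (simp add: hyp_sum_def c_def atLeast0AtMost)
  have vS: "Ts ((Ts ^^ j) ((T ^^ j) (T x))) = v (Suc j)" for j
    by (simp add: v_def funpow_swap1)
  have e1: "Ts (hyp_sum T n (T x)) = (\<Sum>j\<le>n. c n j *\<^sub>R v (Suc j))"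
    by (simp add: hyp clinear_sum[OF adj_lin] clinear_scaleR[OF adj_lin] vS)
  have cS: "c (Suc n) (Suc j) = c n (Suc j) - c n j" for j
    by (simp add: c_def algebra_simps)
  have c0: "c m 0 = 1" for m by (simp add: c_def)
  have "hyp_sum T (Suc n) x = (\<Sum>j\<le>Suc n. c (Suc n) j *\<^sub>R v j)" by (simp add: hyp v_def)
  also have "\<dots> = c (Suc n) 0 *\<^sub>R v 0 + (\<Sum>j\<le>n. c (Suc n) (Suc j) *\<^sub>R v (Suc j))"
    by (rule sum.atMost_Suc_shift)
  also have "\<dots> = v 0 + (\<Sum>j\<le>n. c n (Suc j) *\<^sub>R v (Suc j)) - (\<Sum>j\<le>n. c n j *\<^sub>R v (Suc j))"
    by (simp add: c0 cS scaleR_diff_left sum_subtractf)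
  also have "v 0 + (\<Sum>j\<le>n. c n (Suc j) *\<^sub>R v (Suc j)) = (\<Sum>j\<le>Suc n. c n j *\<^sub>R v j)"
    by (simp only: sum.atMost_Suc_shift c0 scaleR_one)
  also have "\<dots> = (\<Sum>j\<le>n. c n j *\<^sub>R v j)" by (simp add: c_def)
  also have "\<dots> = hyp_sum T n x" by (simp add: hyp v_def)
  finally show ?thesis using e1 by simp
qed

lemma A_rec: "A_op T (Suc n) x = A_op T n x - Ts (A_op T n (T x))"
  by (simp add: A_op_def hyp_rec clinear_minus[OF adj_lin])

definition q :: "nat \<Rightarrow> 'a \<Rightarrow> real" where "q n y = Re (cinner (A_op T n y) y)"

lemma q_nonneg: "n \<ge> 1 \<Longrightarrow> q n y \<ge> 0"
  using A_pos by (simp add: q_def positive_op_def)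

lemma q_rec: "q (Suc n) y = q n y - q n (T y)"
proof -
  have "cinner (A_op T (Suc n) y) y = cinner (A_op T n y) y - cinner (Ts (A_op T n (T y))) y"
    by (simp add: A_rec cinner_diff_left)
  also have "cinner (Ts (A_op T n (T y))) y = cinner (A_op T n (T y)) (T y)" by (rule adj')
  finally show ?thesis by (simp add: q_def)
qed

lemma A_zero_iff_q: "n \<ge> 1 \<Longrightarrow> A_op T n y = 0 \<longleftrightarrow> q n y = 0"
  using positive_kernel[OF A_pos] by (auto simp: q_def)

lemma ker_step: assumes m: "m \<ge> 2" shows "A_op T (Suc m) x = 0 \<longleftrightarrow> A_op T m x = 0"
proof
  assume "A_op T m x = 0"
  then have "q m x = 0" using m A_zero_iff_q by simp
  then have "q (Suc m) x \<le> 0" using q_rec[of m x] q_nonneg[of m "T x"] m by simp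
  then have "q (Suc m) x = 0" using q_nonneg[of "Suc m" x] by simp
  then show "A_op T (Suc m) x = 0" using A_zero_iff_q by simp
next
  assume "A_op T (Suc m) x = 0"
  then have w0: "q (Suc m) x = 0" using A_zero_iff_q by simp
  define v where "v k = q m ((T ^^ k) x)" for k
  define w where "w k = q (Suc m) ((T ^^ k) x)" for k
  define y where "y k = q (m - 1) ((T ^^ k) x)" for k
  have wv: "w k = v k - v (Suc k)" for k by (simp add: w_def v_def q_rec)
  have wmono: "w (Suc k) \<le> w k" for k
    using q_rec[of "Suc m" "(T ^^ k) x"] q_nonneg[of "Suc (Suc m)" "(T ^^ k) x"] by (simp add: w_def)
  have wnn: "w k \<ge> 0" for k using q_nonneg by (simp add: w_def)
  have wz: "w k = 0" for k
  proof (induction k)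
    case 0 then show ?case using w0 by (simp add: w_def)
  next
    case (Suc k) then show ?case using wmono[of k] wnn[of "Suc k"] by simp
  qed
  have vc: "v k = v 0" for k
    by (induction k) (use wz wv in auto)
  have yv: "y k - y (Suc k) = v k" for k
  proof -
    have "Suc (m - 1) = m" using m by simp
    then show ?thesis using q_rec[of "m - 1" "(T ^^ k) x"] by (simp add: y_def v_def)
  qed
  have yk: "y k = y 0 - real k * v 0" for k
  proof (induction k)
    case 0 then show ?case by simp
  next
    case (Suc k) then show ?case using yv[of k] vc[of k] by (simp add: algebra_simps)
  qed
  have ynn: "y k \<ge> 0" for k using q_nonneg[of "m - 1"] m by (simp add: y_def)
  have v0nn: "v 0 \<ge> 0" using q_nonneg[of m] m by (simp add: v_def)
  have "v 0 = 0"
  proof (rule ccontr)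
    assume "v 0 \<noteq> 0"
    then have vp: "v 0 > 0" using v0nn by simp
    obtain k :: nat where k: "real k > y 0 / v 0" using reals_Archimedean2 by blast
    then have "real k * v 0 > y 0" using vp by (simp add: field_simps)
    then show False using yk[of k] ynn[of k] by simp
  qed
  then have "q m x = 0" by (simp add: v_def)
  then show "A_op T m x = 0" using A_zero_iff_q m by simp
qed

lemma ker_eq: "n \<ge> 2 \<Longrightarrow> A_op T n x = 0 \<longleftrightarrow> A_op T 2 x = 0"
proof (induction n rule: dec_induct)
  case base then show ?case by simp
next
  case (step n) then show ?case using ker_step[of n] by simp
qed


sublocale P2: posop "A_op T 2" by unfold_locales (rule A_pos, simp)

definition U where "U x = P2.Q (T (P2.Q x))"
definition Us where "Us x = P2.Q (Ts (P2.Q x))"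

lemma U_b: "cbounded U"
  unfolding U_def[abs_def] by (rule cbounded_comp[OF P2.Qb cbounded_comp[OF T P2.Qb]])
lemma U_lin: "clinear U" using U_b by (rule cbounded_clinear)
lemma Us_b: "cbounded Us"
  unfolding Us_def[abs_def] by (rule cbounded_comp[OF P2.Qb cbounded_comp[OF adj_cbounded P2.Qb]])
lemma Us_lin: "clinear Us" using Us_b by (rule cbounded_clinear)
lemma U_in: "U x \<in> P2.M" by (simp add: U_def P2.Mc.proj_in)
lemma Us_in: "Us x \<in> P2.M" by (simp add: Us_def P2.Mc.proj_in)
lemma U_Q: "U (P2.Q x) = U x" by (simp add: U_def P2.Mc.proj_proj)
lemma U_adj: "cinner (U x) y = cinner x (Us y)"
proof -
  have "cinner (U x) y = cinner (T (P2.Q x)) (P2.Q y)" by (simp add: U_def P2.Mc.proj_selfadj)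
  also have "\<dots> = cinner (P2.Q x) (Ts (P2.Q y))" by (rule adj)
  also have "\<dots> = cinner x (Us y)" by (simp add: Us_def P2.Mc.proj_selfadj)
  finally show ?thesis .
qed

lemma M_ker_zero: assumes "x \<in> P2.M" "A_op T 2 x = 0" shows "x = 0"
proof -
  have "cinner x x = 0" using assms by (simp add: P2.M_eq orth_def)
  then show ?thesis by (simp only: cinner_self_eq_zero)
qed

lemma Mn: assumes "n \<ge> 2" shows "posop.M (A_op T n) = P2.M"
proof -
  interpret Pn: posop "A_op T n" by unfold_locales (rule A_pos, use assms in simp)
  have "{x. A_op T n x = 0} = {x. A_op T 2 x = 0}" using ker_eq[OF assms] by blast
  then show ?thesis by (simp add: Pn.M_eq P2.M_eq)
qed

definition "invN \<longleftrightarrow> (\<forall>x. A_op T 2 x = 0 \<longrightarrow> A_op T 2 (T x) = 0)"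
definition "commN n \<longleftrightarrow> (\<forall>x. A_op T n (U x) = U (A_op T n x))"

lemma reg_n: assumes n: "n \<ge> 2" shows "regular (A_op T n) T \<longleftrightarrow> invN \<and> commN n"
proof -
  interpret Pn: posop "A_op T n" by unfold_locales (rule A_pos, use n in simp)
  have MM: "Pn.M = P2.M" by (rule Mn[OF n])
  have "regular (A_op T n) T \<longleftrightarrow> (\<forall>x. A_op T n x = 0 \<longrightarrow> A_op T n (T x) = 0) \<and>
         (\<forall>x. A_op T n (Pn.Q (T (Pn.Q x))) = Pn.Q (T (Pn.Q (A_op T n x))))"
    by (rule Pn.regular_iff[OF T])
  also have "(\<forall>x. A_op T n x = 0 \<longrightarrow> A_op T n (T x) = 0) \<longleftrightarrow> invN"
    using ker_eq[OF n] by (simp add: invN_def)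
  also have "(\<forall>x. A_op T n (Pn.Q (T (Pn.Q x))) = Pn.Q (T (Pn.Q (A_op T n x)))) \<longleftrightarrow> commN n"
    by (simp add: MM commN_def U_def)
  finally show ?thesis .
qed

lemma G1: assumes "invN" shows "P2.Q (T x) = U x"
proof -
  have "A_op T 2 (x - P2.Q x) = 0" by (rule P2.A_diffQ)
  then have "A_op T 2 (T (x - P2.Q x)) = 0" using assms by (simp add: invN_def)
  then have "P2.Q (T (x - P2.Q x)) = 0" by (rule P2.ker_Q)
  then show ?thesis by (simp add: U_def clinear_diff[OF Tlin] clinear_diff[OF P2.Qlin])
qed

lemma G2: assumes "invN" "n \<ge> 2" shows "A_op T (Suc n) x = A_op T n x - Us (A_op T n (U x))"
proof -
  interpret Pn: posop "A_op T n" by unfold_locales (rule A_pos, use assms in simp)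
  interpret Pn1: posop "A_op T (Suc n)" by unfold_locales (rule A_pos, use assms in simp)
  have MM: "Pn.M = P2.M" by (rule Mn[OF assms(2)])
  have MM1: "Pn1.M = P2.M" by (rule Mn) (use assms in simp)
  have e1: "A_op T n (T x) = A_op T n (U x)"
    using Pn.A_Q[of "T x"] by (simp add: MM G1[OF assms(1)])
  have "Ts (A_op T n (T x)) = A_op T n x - A_op T (Suc n) x" by (simp add: A_rec)
  moreover have "A_op T n x - A_op T (Suc n) x \<in> P2.M"
    using Pn.A_in_M[of x] Pn1.A_in_M[of x] MM MM1 csubspace_diff[OF P2.Mc.csub] by simp
  ultimately have inM: "Ts (A_op T n (U x)) \<in> P2.M" using e1 by simp
  have "Us (A_op T n (U x)) = P2.Q (Ts (A_op T n (U x)))"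
    using Pn.Q_A[of "U x"] by (simp add: Us_def MM)
  also have "\<dots> = Ts (A_op T n (U x))" by (rule P2.Mc.proj_id[OF inM])
  finally show ?thesis by (simp add: A_rec e1)
qed

lemma G4: assumes "n \<ge> 2" "commN n" shows "A_op T n (Us x) = Us (A_op T n x)"
proof -
  interpret Pn: posop "A_op T n" by unfold_locales (rule A_pos, use assms in simp)
  show ?thesis
  proof (rule cinner_ext)
    fix z
    have "cinner z (A_op T n (Us x)) = cinner (A_op T n z) (Us x)" by (simp add: Pn.Asa)
    also have "\<dots> = cinner (U (A_op T n z)) x" by (simp add: U_adj)
    also have "\<dots> = cinner (A_op T n (U z)) x" using assms(2) by (simp add: commN_def)
    also have "\<dots> = cinner (U z) (A_op T n x)" by (simp add: Pn.Asa)
    also have "\<dots> = cinner z (Us (A_op T n x))" by (simp add: U_adj)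
    finally show "cinner z (A_op T n (Us x)) = cinner z (Us (A_op T n x))" .
  qed
qed

lemma comp_M: "x \<in> P2.M \<Longrightarrow> compression P2.M T x = U x"
  by (simp add: compression_def U_def P2.Mc.proj_id)

lemma adjc_M: "y \<in> P2.M \<Longrightarrow> adjoint_on P2.M (compression P2.M T) y = Us y"
  by (simp add: adjoint_on_compression[OF P2.M_cs T] Us_def P2.Mc.proj_id)

lemma qn_iff: "quasinormal_on P2.M (compression P2.M T) \<longleftrightarrow> (\<forall>x. U (Us (U x)) = Us (U (U x)))"
proof
  assume qn: "quasinormal_on P2.M (compression P2.M T)"
  show "\<forall>x. U (Us (U x)) = Us (U (U x))"
  proof
    fix x
    have xM: "P2.Q x \<in> P2.M" by (rule P2.Mc.proj_in)
    have "compression P2.M T (adjoint_on P2.M (compression P2.M T) (compression P2.M T (P2.Q x)))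
        = adjoint_on P2.M (compression P2.M T) (compression P2.M T (compression P2.M T (P2.Q x)))"
      using qn xM by (simp add: quasinormal_on_def)
    then show "U (Us (U x)) = Us (U (U x))"
      using xM by (simp add: comp_M adjc_M U_in Us_in U_Q)
  qed
next
  assume h: "\<forall>x. U (Us (U x)) = Us (U (U x))"
  show "quasinormal_on P2.M (compression P2.M T)"
    unfolding quasinormal_on_def
  proof
    fix x assume xM: "x \<in> P2.M"
    show "compression P2.M T (adjoint_on P2.M (compression P2.M T) (compression P2.M T x))
        = adjoint_on P2.M (compression P2.M T) (compression P2.M T (compression P2.M T x))"
      using xM h by (simp add: comp_M adjc_M U_in Us_in)
  qed
qed

lemma A3_eq: assumes "invN" "commN 2" shows "A_op T 3 y = A_op T 2 y - A_op T 2 (Us (U y))"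
  using G2[OF assms(1), of 2 y] G4[of 2 "U y"] assms(2) by (simp add: numeral_3_eq_3)

lemma c2_c3:
  assumes r2: "regular (A_op T 2) T" and r3: "regular (A_op T 3) T"
  shows "quasinormal_on P2.M (compression P2.M T) \<and> contraction_on P2.M (compression P2.M T)"
proof
  have invN and c2: "commN 2" using r2 reg_n[of 2] by auto
  have c3: "commN 3" using r3 reg_n[of 3] by auto
  have "U (Us (U x)) = Us (U (U x))" for x
  proof -
    have "A_op T 3 (U x) = U (A_op T 3 x)" using c3 by (simp add: commN_def)
    then have "A_op T 2 (U x) - A_op T 2 (Us (U (U x))) = U (A_op T 2 x) - U (A_op T 2 (Us (U x)))"
      by (simp add: A3_eq[OF \<open>invN\<close> c2] clinear_diff[OF U_lin])
    also have "U (A_op T 2 x) = A_op T 2 (U x)" using c2 by (simp add: commN_def)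
    also have "U (A_op T 2 (Us (U x))) = A_op T 2 (U (Us (U x)))" using c2 by (simp add: commN_def)
    finally have "A_op T 2 (Us (U (U x)) - U (Us (U x))) = 0"
      by (simp add: clinear_diff[OF P2.Alin])
    moreover have "Us (U (U x)) - U (Us (U x)) \<in> P2.M"
      using Us_in U_in csubspace_diff[OF P2.Mc.csub] by blast
    ultimately have "Us (U (U x)) - U (Us (U x)) = 0" using M_ker_zero by blast
    then show ?thesis by simp
  qed
  then show "quasinormal_on P2.M (compression P2.M T)" using qn_iff by blast
next
  have key: "P2.R (T z) = P2.Q (T (P2.R z))" for z by (rule P2.regular_key[OF T r2])
  have bnd: "norm (P2.Q (T (P2.R y))) \<le> norm (P2.R y)" for y
  proof -
    have "q 3 y \<ge> 0" by (rule q_nonneg) simp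
    then have "q 2 (T y) \<le> q 2 y" using q_rec[of 2 y] by (simp add: numeral_3_eq_3)
    then have "(norm (P2.R (T y)))\<^sup>2 \<le> (norm (P2.R y))\<^sup>2" by (simp add: q_def P2.Re_A_R)
    then have "norm (P2.R (T y)) \<le> norm (P2.R y)" using power2_le_imp_le by simp
    then show ?thesis by (simp add: key)
  qed
  define C where "C = {x. norm (P2.Q (T x)) \<le> norm x}"
  have "closed C"
  proof -
    have "continuous_on UNIV (\<lambda>x. P2.Q (T x))" by (rule cbounded_continuous[OF cbounded_comp[OF P2.Qb T]])
    then have "continuous_on UNIV (\<lambda>x. norm (P2.Q (T x)))" by (intro continuous_intros)
    then show ?thesis unfolding C_def by (intro closed_Collect_le) (auto intro: continuous_intros)
  qed
  moreover have "range P2.R \<subseteq> C" using bnd by (auto simp: C_def)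
  ultimately have "closure (range P2.R) \<subseteq> C" by (rule closure_minimal[rotated])
  then have "P2.M \<subseteq> C" by (simp add: P2.closure_range_R)
  then show "contraction_on P2.M (compression P2.M T)"
    by (auto simp: contraction_on_def compression_def C_def)
qed

lemma c3_c1:
  assumes r2: "regular (A_op T 2) T" and qn: "quasinormal_on P2.M (compression P2.M T)"
  shows "\<forall>n\<ge>2. regular (A_op T n) T"
proof -
  have invN and c2: "commN 2" using r2 reg_n[of 2] by auto
  have h: "\<And>x. U (Us (U x)) = Us (U (U x))" using qn qn_iff by blast
  have "commN n" if "n \<ge> 2" for n
    using that
  proof (induction n rule: dec_induct)
    case base then show ?case by (rule c2)
  next
    case (step n)
    note cn = step.IH
    have "A_op T (Suc n) (U x) = U (A_op T (Suc n) x)" for x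
    proof -
      have "A_op T (Suc n) (U x) = A_op T n (U x) - A_op T n (Us (U (U x)))"
        by (simp add: G2[OF \<open>invN\<close> step.hyps(1)] G4[OF step.hyps(1) cn])
      also have "\<dots> = A_op T n (U x) - A_op T n (U (Us (U x)))" by (simp add: h)
      also have "\<dots> = U (A_op T n x) - U (A_op T n (Us (U x)))" using cn by (simp add: commN_def)
      also have "\<dots> = U (A_op T (Suc n) x)"
        by (simp add: G2[OF \<open>invN\<close> step.hyps(1)] G4[OF step.hyps(1) cn] clinear_diff[OF U_lin])
      finally show ?thesis .
    qed
    then show ?case by (simp add: commN_def)
  qed
  then show ?thesis using reg_n \<open>invN\<close> by blast
qed

lemma main:
  "let M = closure (range (A_op T 2));
       c1 = (\<forall>n::nat\<ge>2. regular (A_op T n) T);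
       c2 = (regular (A_op T 2) T \<and> regular (A_op T 3) T);
       c3 = (regular (A_op T 2) T \<and> quasinormal_on M (compression M T)
             \<and> contraction_on M (compression M T))
   in (c1 \<longleftrightarrow> c2) \<and> (c2 \<longleftrightarrow> c3) \<and>
      ((c1 \<or> c2 \<or> c3) \<longrightarrow> (\<forall>n::nat\<ge>3. kernel (A_op T 2) = kernel (A_op T n)))"
proof -
  have MM: "closure (range (A_op T 2)) = P2.M" by (simp add: P2.M_def)
  have k: "\<forall>n::nat\<ge>3. kernel (A_op T 2) = kernel (A_op T n)"
  proof (intro allI impI)
    fix n :: nat assume "n \<ge> 3"
    then have "\<And>x. A_op T n x = 0 \<longleftrightarrow> A_op T 2 x = 0" using ker_eq[of n] by simp
    then show "kernel (A_op T 2) = kernel (A_op T n)" by (simp add: kernel_def)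
  qed
  have 12: "(\<forall>n::nat\<ge>2. regular (A_op T n) T) \<Longrightarrow> regular (A_op T 2) T \<and> regular (A_op T 3) T" by simp
  have 23: "regular (A_op T 2) T \<and> regular (A_op T 3) T \<Longrightarrow> regular (A_op T 2) T \<and>
      quasinormal_on P2.M (compression P2.M T) \<and> contraction_on P2.M (compression P2.M T)"
    using c2_c3 by blast
  have 31: "regular (A_op T 2) T \<and>
      quasinormal_on P2.M (compression P2.M T) \<and> contraction_on P2.M (compression P2.M T) \<Longrightarrow>
      (\<forall>n::nat\<ge>2. regular (A_op T n) T)"
    using c3_c1 by blast
  show ?thesis unfolding Let_def MM
  proof (intro conjI impI)
    show "(\<forall>n\<ge>2. regular (A_op T n) T) = (regular (A_op T 2) T \<and> regular (A_op T 3) T)"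
      using 12 23 31 by (intro iffI) blast+
    show "(regular (A_op T 2) T \<and> regular (A_op T 3) T) =
      (regular (A_op T 2) T \<and> quasinormal_on P2.M (compression P2.M T) \<and> contraction_on P2.M (compression P2.M T))"
      using 12 23 31 by (intro iffI) blast+
  qed (rule k)
qed

end

theorem theorem4p5:
  fixes T :: "'a::chilbert_space \<Rightarrow> 'a"
  assumes "cbounded T"
    and "regular (Delta T) T"
    and "completely_hyperexpansive T"
  shows "let M = closure (range (A_op T 2));
             c1 = (\<forall>n::nat\<ge>2. regular (A_op T n) T);
             c2 = (regular (A_op T 2) T \<and> regular (A_op T 3) T);
             c3 = (regular (A_op T 2) T \<and> quasinormal_on M (compression M T)
                   \<and> contraction_on M (compression M T))
         in (c1 \<longleftrightarrow> c2) \<and> (c2 \<longleftrightarrow> c3) \<and>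
            ((c1 \<or> c2 \<or> c3) \<longrightarrow> (\<forall>n::nat\<ge>3. kernel (A_op T 2) = kernel (A_op T n)))"
proof -
  interpret che T using assms(1,3) by unfold_locales
  show ?thesis by (rule main)
qed

end
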